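(* Let $F$ and $\pi$ be smooth positive probability densities on $\mathbb{T}^2=[0,1]^2$ (periodic). For a smooth vector field $v$ on $\mathbb{T}^2$ satisfying $\mathrm{div}(Fv)=0$, there exists a smooth diffeomorphism $Z:\mathbb{T}^2\to\mathbb{T}^2$ such that $\bar v:=Z_{\#}v$ satisfies $\mathrm{div}(\pi\bar v)=0$. Moreover, the operators $\bar v\cdot\nabla$ and $v\cdot\nabla$ have the same eigenvalues, and $\phi$ is an eigenfunction of $v\cdot\nabla$ if and only if $\bar\phi$, defined by $\bar\phi(Z(x))=\phi(x)$, is an eigenfunction of $\bar v\cdot\nabla$.
   Context: For a diffeomorphism $Z$ of $\mathbb{T}^2$ with $z=Z(x)$, the pushforward of a vector field $v$ is $Z_{\#}v:=(v\cdot\nabla_x Z)\circ Z^{-1}$, i.e. $Z_\# v(z)=DZ(Z^{-1}(z))\,v(Z^{-1}(z))$. *)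

theory Defs
  imports "HOL-Analysis.Analysis"
begin

text \<open>The torus T^2 = R^2 / Z^2 is modelled through Z^2-periodic objects on real^2.\<close>

definition lattice_equiv :: "real^2 \<Rightarrow> real^2 \<Rightarrow> bool" where
  "lattice_equiv x y \<longleftrightarrow> (\<forall>i. (x - y) $ i \<in> \<int>)"

definition periodic2 :: "(real^2 \<Rightarrow> 'a) \<Rightarrow> bool" where
  "periodic2 f \<longleftrightarrow> (\<forall>x y. lattice_equiv x y \<longrightarrow> f x = f y)"

fun C_k :: "nat \<Rightarrow> (real^2 \<Rightarrow> 'a::real_normed_vector) \<Rightarrow> bool" where
  "C_k 0 f = continuous_on UNIV f"
| "C_k (Suc k) f = ((\<forall>x. f differentiable (at x)) \<and>
      (\<forall>i. C_k k (\<lambda>x. frechet_derivative f (at x) (axis i 1))))"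

definition smooth2 :: "(real^2 \<Rightarrow> 'a::real_normed_vector) \<Rightarrow> bool" where
  "smooth2 f \<longleftrightarrow> (\<forall>k. C_k k f)"

definition prob_density :: "(real^2 \<Rightarrow> real) \<Rightarrow> bool" where
  "prob_density F \<longleftrightarrow> smooth2 F \<and> periodic2 F \<and> (\<forall>x. F x > 0) \<and>
      (F has_integral 1) (cbox 0 1)"

definition vfield :: "(real^2 \<Rightarrow> real^2) \<Rightarrow> bool" where
  "vfield v \<longleftrightarrow> smooth2 v \<and> periodic2 v"

definition divergence :: "(real^2 \<Rightarrow> real^2) \<Rightarrow> real^2 \<Rightarrow> real" where
  "divergence u x = (\<Sum>i\<in>UNIV. frechet_derivative (\<lambda>y. u y $ i) (at x) (axis i 1))"

text \<open>A smooth diffeomorphism of T^2, given by a lift Z : R^2 -> R^2 together with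
  a lift W of its inverse; both descend to T^2 and are mutually inverse there.\<close>
definition torus_diffeo :: "(real^2 \<Rightarrow> real^2) \<Rightarrow> (real^2 \<Rightarrow> real^2) \<Rightarrow> bool" where
  "torus_diffeo Z W \<longleftrightarrow> smooth2 Z \<and> smooth2 W \<and>
     (\<forall>x y. lattice_equiv x y \<longrightarrow> lattice_equiv (Z x) (Z y)) \<and>
     (\<forall>x y. lattice_equiv x y \<longrightarrow> lattice_equiv (W x) (W y)) \<and>
     (\<forall>x. lattice_equiv (W (Z x)) x) \<and> (\<forall>z. lattice_equiv (Z (W z)) z)"

text \<open>Pushforward Z_# v (z) = DZ(Z^{-1} z) v(Z^{-1} z), with W the lift of Z^{-1}.\<close>
definition pushforward :: "(real^2 \<Rightarrow> real^2) \<Rightarrow> (real^2 \<Rightarrow> real^2) \<Rightarrow> (real^2 \<Rightarrow> real^2) \<Rightarrow> real^2 \<Rightarrow> real^2" where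
  "pushforward Z W v z = frechet_derivative Z (at (W z)) (v (W z))"

definition eigenfun :: "(real^2 \<Rightarrow> real^2) \<Rightarrow> complex \<Rightarrow> (real^2 \<Rightarrow> complex) \<Rightarrow> bool" where
  "eigenfun v lam phi \<longleftrightarrow> smooth2 phi \<and> periodic2 phi \<and> (\<exists>x. phi x \<noteq> 0) \<and>
     (\<forall>x. frechet_derivative phi (at x) (v x) = lam * phi x)"

definition eigenvalues :: "(real^2 \<Rightarrow> real^2) \<Rightarrow> complex set" where
  "eigenvalues v = {lam. \<exists>phi. eigenfun v lam phi}"

end

theory Submission
  imports Defs
begin

definition pd :: "2 \<Rightarrow> (real^2 \<Rightarrow> 'a::real_normed_vector) \<Rightarrow> real^2 \<Rightarrow> 'a" where
  "pd i f x = frechet_derivative f (at x) (axis i 1)"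

lemma vec2_eta: "(x::real^2) = x$1 *\<^sub>R axis 1 1 + x$2 *\<^sub>R axis 2 1"
  by (simp add: vec_eq_iff forall_2 axis_def)

lemma linear_2:
  assumes "linear L" shows "L (x::real^2) = x$1 *\<^sub>R L (axis 1 1) + x$2 *\<^sub>R L (axis 2 1)"
  by (subst vec2_eta) (simp add: linear_add[OF assms] linear_scale[OF assms])

lemma pd_has_derivative:
  assumes "f differentiable at x"
  shows "(f has_derivative (\<lambda>h. h$1 *\<^sub>R pd 1 f x + h$2 *\<^sub>R pd 2 f x)) (at x)"
proof -
  have d: "(f has_derivative frechet_derivative f (at x)) (at x)"
    using assms frechet_derivative_works by blast
  have "linear (frechet_derivative f (at x))"
    using d has_derivative_linear by blast
  then have "frechet_derivative f (at x) = (\<lambda>h. h$1 *\<^sub>R pd 1 f x + h$2 *\<^sub>R pd 2 f x)"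
    by (intro ext) (subst linear_2, simp_all add: pd_def)
  with d show ?thesis by simp
qed

lemma pd_at:
  assumes "(f has_derivative f') (at x)" shows "pd i f x = f' (axis i 1)"
  using frechet_derivative_at[OF assms] by (simp add: pd_def)

lemma diff_cont: "(\<forall>x. f differentiable (at x)) \<Longrightarrow> continuous_on UNIV f"
  by (simp add: continuous_on_eq_continuous_at differentiable_imp_continuous_within)

lemma C_k_cont: "C_k k f \<Longrightarrow> continuous_on UNIV f"
  by (cases k) (auto intro!: diff_cont)

lemma C_k_mono: "C_k (Suc k) f \<Longrightarrow> C_k k f"
proof (induction k arbitrary: f)
  case 0 then show ?case using diff_cont by auto
next
  case (Suc k) then show ?case by auto
qed


lemma C_k_Suc: "C_k (Suc k) f \<longleftrightarrow> (\<forall>x. f differentiable (at x)) \<and> (\<forall>i. C_k k (pd i f))"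
  by (simp add: pd_def[abs_def])

lemma smooth2_iff: "smooth2 f \<longleftrightarrow> (\<forall>x. f differentiable (at x)) \<and> (\<forall>i. smooth2 (pd i f))"
proof
  assume s: "smooth2 f"
  have "C_k (Suc 0) f" using s unfolding smooth2_def by blast
  then have "\<forall>x. f differentiable (at x)" by simp
  moreover have "\<forall>i. smooth2 (pd i f)"
  proof
    fix i show "smooth2 (pd i f)" unfolding smooth2_def
    proof
      fix k have "C_k (Suc k) f" using s unfolding smooth2_def by blast
      then show "C_k k (pd i f)" unfolding C_k_Suc by blast
    qed
  qed
  ultimately show "(\<forall>x. f differentiable (at x)) \<and> (\<forall>i. smooth2 (pd i f))" by blast
next
  assume h: "(\<forall>x. f differentiable (at x)) \<and> (\<forall>i. smooth2 (pd i f))"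
  have suc: "C_k (Suc m) f" for m
    unfolding C_k_Suc using h unfolding smooth2_def by blast
  show "smooth2 f" unfolding smooth2_def
  proof
    fix k show "C_k k f" using suc C_k_mono by blast
  qed
qed

lemma smooth2_diff: "smooth2 f \<Longrightarrow> f differentiable (at x)"
  using smooth2_iff by blast

lemma smooth2_pd: "smooth2 f \<Longrightarrow> smooth2 (pd i f)"
  using smooth2_iff by blast

lemma smooth2_C_k: "smooth2 f \<Longrightarrow> C_k k f" by (simp add: smooth2_def)

lemma smooth2_cont: "smooth2 f \<Longrightarrow> continuous_on UNIV f"
  using smooth2_C_k C_k_cont by blast

lemma smooth2_isCont: "smooth2 f \<Longrightarrow> isCont f x"
  using smooth2_cont continuous_on_eq_continuous_at by blast

declare C_k.simps(2)[simp del]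

lemma fd_works: "f differentiable (at x) \<Longrightarrow> (f has_derivative frechet_derivative f (at x)) (at x)"
  using frechet_derivative_works by blast

lemma pd_const: "pd i (\<lambda>x. c) = (\<lambda>x. 0)"
  by (intro ext, rule trans[OF pd_at[OF has_derivative_const]]) simp

lemma C_k_const: "C_k k (\<lambda>x. c)"
proof (induction k arbitrary: c)
  case 0 then show ?case by simp
next
  case (Suc k) then show ?case by (simp add: C_k_Suc pd_const)
qed

lemma pd_lin:
  assumes "bounded_linear L" "f differentiable (at x)"
  shows "pd i (\<lambda>x. L (f x)) x = L (pd i f x)"
  using pd_at[OF bounded_linear.has_derivative[OF assms(1) fd_works[OF assms(2)]]]
  by (simp add: pd_def)

lemma C_k_lin:
  assumes "bounded_linear L" shows "C_k k f \<Longrightarrow> C_k k (\<lambda>x. L (f x))"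
proof (induction k arbitrary: f)
  case 0 then show ?case
    by (auto intro: continuous_on_compose2[OF linear_continuous_on[OF assms]])
next
  case (Suc k)
  have d: "\<forall>x. f differentiable (at x)" using Suc.prems by (simp add: C_k_Suc)
  have "(\<lambda>x. L (f x)) differentiable (at x)" for x
    using bounded_linear.has_derivative[OF assms fd_works[OF d[rule_format]]]
    by (auto simp: differentiable_def)
  moreover have "pd i (\<lambda>x. L (f x)) = (\<lambda>x. L (pd i f x))" for i
    by (intro ext) (simp add: pd_lin[OF assms] d)
  moreover have "C_k k (pd i f)" for i using Suc.prems by (simp add: C_k_Suc)
  ultimately show ?case using Suc.IH by (simp add: C_k_Suc)
qed

lemma pd_add:
  assumes "f differentiable (at x)" "g differentiable (at x)"
  shows "pd i (\<lambda>x. f x + g x) x = pd i f x + pd i g x"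
  using pd_at[OF has_derivative_add[OF fd_works[OF assms(1)] fd_works[OF assms(2)]]]
  by (simp add: pd_def)

lemma C_k_add: "C_k k f \<Longrightarrow> C_k k g \<Longrightarrow> C_k k (\<lambda>x. f x + g x)"
proof (induction k arbitrary: f g)
  case 0 then show ?case by (auto intro: continuous_on_add)
next
  case (Suc k)
  have d: "\<forall>x. f differentiable (at x)" "\<forall>x. g differentiable (at x)" using Suc.prems by (simp_all add: C_k_Suc)
  have "(\<lambda>x. f x + g x) differentiable (at x)" for x
    using d by (auto intro: differentiable_add)
  moreover have "pd i (\<lambda>x. f x + g x) = (\<lambda>x. pd i f x + pd i g x)" for i
    by (intro ext) (simp add: pd_add d)
  moreover have "C_k k (pd i f)" "C_k k (pd i g)" for i using Suc.prems by (simp_all add: C_k_Suc)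
  ultimately show ?case using Suc.IH by (simp add: C_k_Suc)
qed

lemma pd_bil:
  fixes prod :: "'a::real_normed_vector \<Rightarrow> 'b::real_normed_vector \<Rightarrow> 'c::real_normed_vector"
    and f :: "real^2 \<Rightarrow> 'a" and g :: "real^2 \<Rightarrow> 'b"
  assumes "bounded_bilinear prod" "f differentiable (at x)" "g differentiable (at x)"
  shows "pd i (\<lambda>x. prod (f x) (g x)) x = prod (f x) (pd i g x) + prod (pd i f x) (g x)"
  using pd_at[OF bounded_bilinear.FDERIV[OF assms(1) fd_works[OF assms(2)] fd_works[OF assms(3)]]]
  by (simp add: pd_def)

lemma C_k_bil:
  fixes prod :: "'a::real_normed_vector \<Rightarrow> 'b::real_normed_vector \<Rightarrow> 'c::real_normed_vector"
    and f :: "real^2 \<Rightarrow> 'a" and g :: "real^2 \<Rightarrow> 'b"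
  assumes "bounded_bilinear prod"
  shows "C_k k f \<Longrightarrow> C_k k g \<Longrightarrow> C_k k (\<lambda>x. prod (f x) (g x))"
proof (induction k arbitrary: f g)
  case 0 then show ?case
    using bounded_bilinear.continuous_on[OF assms, of UNIV f g] by simp
next
  case (Suc k)
  have d: "\<forall>x. f differentiable (at x)" "\<forall>x. g differentiable (at x)" using Suc.prems by (simp_all add: C_k_Suc)
  have "(\<lambda>x. prod (f x) (g x)) differentiable (at x)" for x
    using bounded_bilinear.FDERIV[OF assms fd_works[OF d(1)[rule_format]] fd_works[OF d(2)[rule_format]]]
    by (auto simp: differentiable_def)
  moreover have "pd i (\<lambda>x. prod (f x) (g x)) = (\<lambda>x. prod (f x) (pd i g x) + prod (pd i f x) (g x))" for i
    by (intro ext) (simp add: pd_bil[OF assms] d)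
  moreover have "C_k k (pd i f)" "C_k k (pd i g)" for i using Suc.prems by (simp_all add: C_k_Suc)
  moreover have "C_k k f" "C_k k g" using Suc.prems C_k_mono by blast+
  moreover have "C_k k (\<lambda>x. prod (f x) (pd i g x) + prod (pd i f x) (g x))" for i
  proof (rule C_k_add)
    show "C_k k (\<lambda>x. prod (f x) (pd i g x))" by (rule Suc.IH) fact+
    show "C_k k (\<lambda>x. prod (pd i f x) (g x))" by (rule Suc.IH) fact+
  qed
  ultimately show ?case unfolding C_k_Suc by presburger
qed

lemma C_k_mult: "C_k k f \<Longrightarrow> C_k k g \<Longrightarrow> C_k k (\<lambda>x. (f x::'a::real_normed_algebra) * g x)"
  using C_k_bil[OF bounded_bilinear_mult] by blast

lemma C_k_scaleR: "C_k k f \<Longrightarrow> C_k k g \<Longrightarrow> C_k k (\<lambda>x. f x *\<^sub>R g x)"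
  using C_k_bil[OF bounded_bilinear_scaleR] by blast

lemma C_k_nth: "C_k k f \<Longrightarrow> C_k k (\<lambda>x. f x $ j)"
  using C_k_lin[OF bounded_linear_vec_nth] by blast

lemma C_k_uminus: "C_k k f \<Longrightarrow> C_k k (\<lambda>x. - f x)"
  using C_k_lin[OF bounded_linear_minus[OF bounded_linear_ident]] by blast

lemma C_k_diff: "C_k k f \<Longrightarrow> C_k k g \<Longrightarrow> C_k k (\<lambda>x. f x - g x)"
  using C_k_add[OF _ C_k_uminus[of k g]] by (simp add: C_k_add C_k_uminus)

lemma pd_comp:
  assumes "h differentiable (at x)" "g differentiable (at (h x))"
  shows "pd i (\<lambda>x. g (h x)) x = (pd i h x)$1 *\<^sub>R pd 1 g (h x) + (pd i h x)$2 *\<^sub>R pd 2 g (h x)"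
proof -
  have "((\<lambda>x. g (h x)) has_derivative (\<lambda>k. (frechet_derivative h (at x) k)$1 *\<^sub>R pd 1 g (h x) + (frechet_derivative h (at x) k)$2 *\<^sub>R pd 2 g (h x))) (at x)"
    using diff_chain_at[OF fd_works[OF assms(1)] pd_has_derivative[OF assms(2)]]
    by (simp add: o_def)
  from pd_at[OF this] show ?thesis by (simp add: pd_def)
qed

lemma diff_comp:
  assumes "h differentiable (at x)" "g differentiable (at (h x))"
  shows "(\<lambda>x. g (h x)) differentiable (at x)"
  using differentiable_chain_at[OF assms] by (simp add: o_def)

lemma C_k_comp: "C_k k g \<Longrightarrow> C_k k h \<Longrightarrow> C_k k (\<lambda>x. g (h x))"
proof (induction k arbitrary: g h)
  case 0 then show ?case
    using continuous_on_compose2[of UNIV g UNIV h] by auto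
next
  case (Suc k)
  have d: "\<forall>x. g differentiable (at x)" "\<forall>x. h differentiable (at x)" using Suc.prems by (simp_all add: C_k_Suc)
  have "(\<lambda>x. g (h x)) differentiable (at x)" for x
    using d diff_comp by blast
  moreover have "pd i (\<lambda>x. g (h x)) = (\<lambda>x. (pd i h x)$1 *\<^sub>R pd 1 g (h x) + (pd i h x)$2 *\<^sub>R pd 2 g (h x))" for i
    by (intro ext) (simp add: pd_comp d)
  moreover have "C_k k (pd i g)" "C_k k (pd i h)" for i using Suc.prems by (simp_all add: C_k_Suc)
  moreover have "C_k k h" using Suc.prems C_k_mono by blast
  then have c: "C_k k (\<lambda>x. pd j g (h x))" for j using Suc.IH \<open>\<And>i. C_k k (pd i g)\<close> by blast
  have "C_k k (\<lambda>x. (pd i h x)$1 *\<^sub>R pd 1 g (h x) + (pd i h x)$2 *\<^sub>R pd 2 g (h x))" for i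
    by (intro C_k_add C_k_scaleR C_k_nth c \<open>\<And>i. C_k k (pd i h)\<close>)
  ultimately show ?case unfolding C_k_Suc by presburger
qed

lemma C_k_inverse:
  "C_k k f \<Longrightarrow> (\<forall>x. f x \<noteq> 0) \<Longrightarrow> C_k k (\<lambda>x. inverse (f x :: real))"
proof (induction k arbitrary: f)
  case 0 then show ?case
    using continuous_on_inverse[of UNIV f] by simp
next
  case (Suc k)
  have d: "\<forall>x. f differentiable (at x)" using Suc.prems by (simp_all add: C_k_Suc)
  have hd: "((\<lambda>x. inverse (f x)) has_derivative (\<lambda>h. - (inverse (f x) * frechet_derivative f (at x) h * inverse (f x)))) (at x)" for x
    using has_derivative_compose[OF fd_works[OF d[rule_format]] has_derivative_inverse'[OF Suc.prems(2)[rule_format]]] by simp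
  then have "(\<lambda>x. inverse (f x)) differentiable (at x)" for x
    by (auto simp: differentiable_def)
  moreover have "pd i (\<lambda>x. inverse (f x)) = (\<lambda>x. - (pd i f x * (inverse (f x) * inverse (f x))))" for i
    using pd_at[OF hd] by (auto simp: pd_def)
  moreover have "C_k k (pd i f)" for i using Suc.prems by (simp_all add: C_k_Suc)
  moreover have "C_k k f" using Suc.prems C_k_mono by blast
  then have c: "C_k k (\<lambda>x. inverse (f x))" using Suc.IH Suc.prems(2) by blast
  have "C_k k (\<lambda>x. - (pd i f x * (inverse (f x) * inverse (f x))))" for i
    by (intro C_k_uminus C_k_mult c \<open>\<And>i. C_k k (pd i f)\<close>)
  ultimately show ?case unfolding C_k_Suc by presburger
qed

lemma vector2_eq: "vector [a, b] = a *\<^sub>R axis 1 1 + b *\<^sub>R (axis 2 1 :: real^2)"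
  by (simp add: vec_eq_iff forall_2 axis_def)

lemma C_k_vector2: "C_k k f \<Longrightarrow> C_k k g \<Longrightarrow> C_k k (\<lambda>x. vector [f x, g x] :: real^2)"
  unfolding vector2_eq by (intro C_k_add C_k_scaleR C_k_const)

lemma vec2_split: "(\<lambda>x. f x :: real^2) = (\<lambda>x. vector [f x $ 1, f x $ 2])"
  by (rule ext) (simp add: vec_eq_iff forall_2)

lemma C_k_vec_iff: "C_k k (f :: real^2 \<Rightarrow> real^2) \<longleftrightarrow> C_k k (\<lambda>x. f x $ 1) \<and> C_k k (\<lambda>x. f x $ 2)"
proof
  assume "C_k k f" then show "C_k k (\<lambda>x. f x $ 1) \<and> C_k k (\<lambda>x. f x $ 2)" by (simp add: C_k_nth)
next
  assume "C_k k (\<lambda>x. f x $ 1) \<and> C_k k (\<lambda>x. f x $ 2)"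
  then have "C_k k (\<lambda>x. vector [f x $ 1, f x $ 2] :: real^2)" by (simp add: C_k_vector2)
  moreover have "(\<lambda>x. vector [f x $ 1, f x $ 2] :: real^2) = f" by (rule ext) (simp add: vec_eq_iff forall_2)
  ultimately show "C_k k f" by simp
qed

lemma smooth2_const: "smooth2 (\<lambda>x. c)" by (simp add: smooth2_def C_k_const)
lemma smooth2_lin: "bounded_linear L \<Longrightarrow> smooth2 f \<Longrightarrow> smooth2 (\<lambda>x. L (f x))"
  by (simp add: smooth2_def C_k_lin)
lemma smooth2_add: "smooth2 f \<Longrightarrow> smooth2 g \<Longrightarrow> smooth2 (\<lambda>x. f x + g x)"
  by (simp add: smooth2_def C_k_add)
lemma smooth2_diff2: "smooth2 f \<Longrightarrow> smooth2 g \<Longrightarrow> smooth2 (\<lambda>x. f x - g x)"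
  by (simp add: smooth2_def C_k_diff)
lemma smooth2_uminus: "smooth2 f \<Longrightarrow> smooth2 (\<lambda>x. - f x)"
  by (simp add: smooth2_def C_k_uminus)
lemma smooth2_mult: "smooth2 f \<Longrightarrow> smooth2 g \<Longrightarrow> smooth2 (\<lambda>x. (f x::'a::real_normed_algebra) * g x)"
  by (simp add: smooth2_def C_k_mult)
lemma smooth2_scaleR: "smooth2 f \<Longrightarrow> smooth2 g \<Longrightarrow> smooth2 (\<lambda>x. f x *\<^sub>R g x)"
  by (simp add: smooth2_def C_k_scaleR)
lemma smooth2_nth: "smooth2 f \<Longrightarrow> smooth2 (\<lambda>x. f x $ j)"
  by (simp add: smooth2_def C_k_nth)
lemma smooth2_comp: "smooth2 g \<Longrightarrow> smooth2 h \<Longrightarrow> smooth2 (\<lambda>x. g (h x))"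
  by (simp add: smooth2_def C_k_comp)
lemma smooth2_inverse: "smooth2 f \<Longrightarrow> (\<forall>x. f x \<noteq> 0) \<Longrightarrow> smooth2 (\<lambda>x. inverse (f x :: real))"
  by (simp add: smooth2_def C_k_inverse)
lemma smooth2_divide: "smooth2 f \<Longrightarrow> smooth2 g \<Longrightarrow> (\<forall>x. g x \<noteq> 0) \<Longrightarrow> smooth2 (\<lambda>x. f x / (g x :: real))"
  by (simp add: divide_inverse smooth2_mult smooth2_inverse)
lemma smooth2_vector2: "smooth2 f \<Longrightarrow> smooth2 g \<Longrightarrow> smooth2 (\<lambda>x. vector [f x, g x] :: real^2)"
  by (simp add: smooth2_def C_k_vector2)
lemma smooth2_vec_iff: "smooth2 (f :: real^2 \<Rightarrow> real^2) \<longleftrightarrow> smooth2 (\<lambda>x. f x $ 1) \<and> smooth2 (\<lambda>x. f x $ 2)"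
  unfolding smooth2_def C_k_vec_iff by blast

lemma C_k_id: "C_k k (\<lambda>x. x)"
proof (cases k)
  case 0 then show ?thesis by simp
next
  case (Suc m)
  have "pd i (\<lambda>x. x) = (\<lambda>x. axis i 1)" for i
    by (intro ext) (simp add: pd_at[OF has_derivative_ident])
  then show ?thesis using Suc by (simp add: C_k_Suc C_k_const)
qed

lemma smooth2_id: "smooth2 (\<lambda>x. x)"
  by (simp add: smooth2_def C_k_id)

lemma axis12[simp]: "axis (1::2) (1::real) $ 1 = 1" "axis (1::2) (1::real) $ 2 = 0"
  "axis (2::2) (1::real) $ 1 = 0" "axis (2::2) (1::real) $ 2 = 1"
  by (simp_all add: axis_def)

definition vec2 :: "real \<Rightarrow> real \<Rightarrow> real^2" where
  "vec2 a b = a *\<^sub>R axis 1 1 + b *\<^sub>R axis 2 1"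

lemma vec2_nth[simp]: "vec2 a b $ 1 = a" "vec2 a b $ 2 = b"
  by (simp_all add: vec2_def axis_def)

lemma vec2_eta2[simp]: "vec2 (x$1) (x$2) = x"
  by (simp add: vec_eq_iff forall_2)

lemma vec2_eq_iff: "vec2 a b = vec2 c d \<longleftrightarrow> a = c \<and> b = d"
  by (metis vec2_nth)

lemma vec2_add: "vec2 a b + vec2 c d = vec2 (a+c) (b+d)"
  by (simp add: vec_eq_iff forall_2)

lemma hd_nth[derivative_intros]:
  "(f has_derivative f') F \<Longrightarrow> ((\<lambda>x. f x $ i) has_derivative (\<lambda>h. f' h $ i)) F"
  by (rule bounded_linear.has_derivative[OF bounded_linear_vec_nth])

lemma hd_nth_id: "((\<lambda>x. x $ i) has_derivative (\<lambda>h. h $ i)) F"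
  by (rule hd_nth[OF has_derivative_ident])

lemma has_derivative_vec2:
  assumes "(f has_derivative f') F" "(g has_derivative g') F"
  shows "((\<lambda>x. vec2 (f x) (g x)) has_derivative (\<lambda>h. vec2 (f' h) (g' h))) F"
  unfolding vec2_def
  by (intro has_derivative_add bounded_linear.has_derivative[OF bounded_linear_scaleR_left] assms)

lemma continuous_on_vec2[continuous_intros]:
  "continuous_on S f \<Longrightarrow> continuous_on S g \<Longrightarrow> continuous_on S (\<lambda>x. vec2 (f x) (g x))"
  unfolding vec2_def by (intro continuous_intros)

lemma line_deriv2:
  assumes "g differentiable (at (vec2 a t))"
  shows "((\<lambda>t. g (vec2 a t)) has_real_derivative pd 2 g (vec2 a t)) (at t)"
proof -
  have l: "((\<lambda>t. vec2 a t) has_derivative (\<lambda>h. vec2 0 h)) (at t)"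
    by (intro has_derivative_vec2 derivative_eq_intros hd_nth_id) auto
  have "((\<lambda>t. g (vec2 a t)) has_derivative (\<lambda>h. (vec2 0 h)$1 * pd 1 g (vec2 a t) + (vec2 0 h)$2 * pd 2 g (vec2 a t))) (at t)"
    using diff_chain_at[OF l pd_has_derivative[OF assms]] by (simp add: o_def)
  then show ?thesis unfolding has_field_derivative_def
    by (rule has_derivative_eq_rhs) (auto simp: fun_eq_iff)
qed

lemma line_deriv1:
  assumes "g differentiable (at (vec2 t b))"
  shows "((\<lambda>t. g (vec2 t b)) has_real_derivative pd 1 g (vec2 t b)) (at t)"
proof -
  have l: "((\<lambda>t. vec2 t b) has_derivative (\<lambda>h. vec2 h 0)) (at t)"
    by (intro has_derivative_vec2 derivative_eq_intros hd_nth_id) auto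
  have "((\<lambda>t. g (vec2 t b)) has_derivative (\<lambda>h. (vec2 h 0)$1 * pd 1 g (vec2 t b) + (vec2 h 0)$2 * pd 2 g (vec2 t b))) (at t)"
    using diff_chain_at[OF l pd_has_derivative[OF assms]] by (simp add: o_def)
  then show ?thesis unfolding has_field_derivative_def
    by (rule has_derivative_eq_rhs) (auto simp: fun_eq_iff)
qed

definition Iop :: "(real^2 \<Rightarrow> real) \<Rightarrow> real^2 \<Rightarrow> real" where
  "Iop f x = integral (cbox 0 1) (\<lambda>s. x$2 * f (vec2 (x$1) (x$2 * s)))"

lemma blin_apply2: "blinfun_apply (a *\<^sub>R blinfun_inner_left (axis 1 1) + b *\<^sub>R blinfun_inner_left (axis 2 1 :: real^2)) h
   = h$1 * a + h$2 * (b::real)"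
  by (simp add: inner_axis blinfun.add_left blinfun.scaleR_left mult.commute)

lemma Iop_props:
  assumes f: "smooth2 f"
  shows "Iop f differentiable (at x) \<and> pd 1 (Iop f) x = Iop (pd 1 f) x \<and> pd 2 (Iop f) x = f x"
proof -
  define p where "p x s = vec2 (x$1) (x$2 * s)" for x :: "real^2" and s :: real
  define al where "al x t = x$2 * pd 1 f (p x t)" for x t
  define be where "be x t = f (p x t) + x$2 * t * pd 2 f (p x t)" for x t
  define fx where "fx x t = al x t *\<^sub>R blinfun_inner_left (axis 1 1) + be x t *\<^sub>R blinfun_inner_left (axis 2 1 :: real^2)" for x t
  have cf: "continuous_on UNIV f" and c1: "continuous_on UNIV (pd 1 f)" and c2: "continuous_on UNIV (pd 2 f)"
    using f smooth2_cont smooth2_pd by blast+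
  have cp: "continuous_on UNIV (\<lambda>z::(real^2)\<times>real. p (fst z) (snd z))"
    unfolding p_def by (intro continuous_intros)
  have der: "((\<lambda>x. x$2 * f (p x t)) has_derivative blinfun_apply (fx x t)) (at x within UNIV)" for x t
  proof -
    have dp: "((\<lambda>x. p x t) has_derivative (\<lambda>h. vec2 (h$1) (h$2 * t))) (at x)"
      unfolding p_def by (intro has_derivative_vec2 derivative_eq_intros hd_nth_id) auto
    have df: "(f has_derivative (\<lambda>h. h$1 *\<^sub>R pd 1 f (p x t) + h$2 *\<^sub>R pd 2 f (p x t))) (at (p x t))"
      using pd_has_derivative smooth2_diff[OF f] by blast
    have "((\<lambda>x. f (p x t)) has_derivative (\<lambda>h. h$1 * pd 1 f (p x t) + (h$2 * t) * pd 2 f (p x t))) (at x)"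
      using diff_chain_at[OF dp df] by (simp add: o_def)
    then have "((\<lambda>x. x$2 * f (p x t)) has_derivative (\<lambda>h. x$2 * (h$1 * pd 1 f (p x t) + (h$2 * t) * pd 2 f (p x t)) + h$2 * f (p x t))) (at x)"
      by (intro derivative_eq_intros) auto
    moreover have "(\<lambda>h. x$2 * (h$1 * pd 1 f (p x t) + (h$2 * t) * pd 2 f (p x t)) + h$2 * f (p x t)) = blinfun_apply (fx x t)"
      by (rule ext) (unfold fx_def blin_apply2 al_def be_def, simp add: algebra_simps)
    ultimately show ?thesis by simp
  qed
  have cal: "continuous_on UNIV (\<lambda>z::(real^2)\<times>real. al (fst z) (snd z))"
    unfolding al_def by (intro continuous_intros continuous_on_compose2[OF c1 cp]) auto
  have cbe: "continuous_on UNIV (\<lambda>z::(real^2)\<times>real. be (fst z) (snd z))"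
    unfolding be_def by (intro continuous_intros continuous_on_compose2[OF c2 cp] continuous_on_compose2[OF cf cp]) auto
  have cfx: "continuous_on (UNIV \<times> cbox 0 1) (\<lambda>(x, t). fx x t)"
    unfolding fx_def case_prod_beta
    by (intro continuous_intros continuous_on_subset[OF cal] continuous_on_subset[OF cbe]) auto
  have cfp: "continuous_on UNIV (\<lambda>s. x$2 * f (p x s))" for x
    unfolding p_def by (intro continuous_intros continuous_on_compose2[OF cf]) auto
  have int: "(\<lambda>s. x$2 * f (p x s)) integrable_on cbox 0 1" for x
    by (rule integrable_continuous) (rule continuous_on_subset[OF cfp], auto)
  have L: "(Iop f has_derivative blinfun_apply (integral (cbox 0 1) (fx x))) (at x)"
  proof -
    note lr = leibniz_rule[where U=UNIV and f="\<lambda>x s. x$2 * f (p x s)" and a=0 and b=1 and fx=fx]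
    note lr2 = lr[OF der int cfx]
    show ?thesis using lr2 by (simp add: Iop_def[abs_def] p_def)
  qed
  have "continuous_on (cbox 0 1) (\<lambda>t. (\<lambda>(x, t). fx x t) (x, t))"
    by (rule continuous_on_compose2[OF cfx]) (auto intro: continuous_intros)
  then have cfxt: "continuous_on (cbox 0 1) (fx x)" by simp
  have intfx: "fx x integrable_on cbox 0 1" by (rule integrable_continuous[OF cfxt])
  have app0: "blinfun_apply (integral (cbox 0 1) (fx x)) h = integral (cbox 0 1) (\<lambda>t. h$1 * al x t + h$2 * be x t)" for h
    by (subst blinfun_apply_integral[OF intfx]) (unfold fx_def blin_apply2, rule refl)
  have app: "blinfun_apply (integral {0..1} (fx x)) h = integral {0..1} (\<lambda>t. h$1 * al x t + h$2 * be x t)" for h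
    using app0[of h] by simp
  have diff: "Iop f differentiable (at x)" using L by (auto simp: differentiable_def)
  have p1: "pd 1 (Iop f) x = Iop (pd 1 f) x"
    using pd_at[OF L] by (simp add: app al_def Iop_def p_def)
  have "((\<lambda>t. be x t) has_integral (1 * f (p x 1) - 0 * f (p x 0))) {0..1}"
  proof (rule fundamental_theorem_of_calculus)
    fix t :: real assume "t \<in> {0..1}"
    have dp: "((\<lambda>t. p x t) has_derivative (\<lambda>h. vec2 0 (x$2 * h))) (at t)"
      unfolding p_def by (intro has_derivative_vec2 derivative_eq_intros hd_nth_id) auto
    have df: "(f has_derivative (\<lambda>h. h$1 *\<^sub>R pd 1 f (p x t) + h$2 *\<^sub>R pd 2 f (p x t))) (at (p x t))"
      using pd_has_derivative smooth2_diff[OF f] by blast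
    have "((\<lambda>t. f (p x t)) has_derivative (\<lambda>h. (x$2 * h) * pd 2 f (p x t))) (at t)"
      using diff_chain_at[OF dp df] by (simp add: o_def)
    then have "((\<lambda>t. t * f (p x t)) has_derivative (\<lambda>h. t * ((x$2 * h) * pd 2 f (p x t)) + h * f (p x t))) (at t)"
      by (intro derivative_eq_intros) auto
    then show "((\<lambda>t. t * f (p x t)) has_vector_derivative be x t) (at t within {0..1})"
      unfolding has_vector_derivative_def be_def
      by (rule has_derivative_at_withinI[OF has_derivative_eq_rhs]) (auto simp: algebra_simps)
  qed simp
  then have "integral (cbox 0 1) (\<lambda>t. be x t) = f x"
    by (simp add: integral_unique p_def)
  then have p2: "pd 2 (Iop f) x = f x"
    using pd_at[OF L] by (simp add: app)
  show ?thesis using diff p1 p2 by blast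
qed

lemma C_k_Iop: "smooth2 f \<Longrightarrow> C_k k (Iop f)"
proof (induction k arbitrary: f)
  case 0
  then show ?case using Iop_props diff_cont by (simp; blast)
next
  case (Suc k)
  have "pd 1 (Iop f) = Iop (pd 1 f)" "pd 2 (Iop f) = f"
    using Iop_props[OF Suc.prems] by auto
  moreover have "C_k k (Iop (pd 1 f))" using Suc.IH smooth2_pd Suc.prems by blast
  moreover have "C_k k f" using Suc.prems smooth2_C_k by blast
  ultimately show ?case unfolding C_k_Suc using Iop_props[OF Suc.prems]
    by (metis exhaust_2)
qed

lemma smooth2_Iop: "smooth2 f \<Longrightarrow> smooth2 (Iop f)"
  by (simp add: smooth2_def C_k_Iop)

lemma line_deriv1_diff:
  assumes "smooth2 f"
  shows "((\<lambda>s. f (vec2 s t1) - f (vec2 s t0)) has_real_derivative (pd 1 f (vec2 s t1) - pd 1 f (vec2 s t0))) (at s)"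
  using assms by (intro DERIV_diff line_deriv1 smooth2_diff)

lemma line_deriv2_diff:
  assumes "smooth2 f"
  shows "((\<lambda>t. f (vec2 s1 t) - f (vec2 s0 t)) has_real_derivative (pd 2 f (vec2 s1 t) - pd 2 f (vec2 s0 t))) (at t)"
  using assms by (intro DERIV_diff line_deriv2 smooth2_diff)

lemma schwarz_delta1:
  assumes f: "smooth2 f" and h: "h > 0"
  shows "\<exists>\<xi> \<eta>. a < \<xi> \<and> \<xi> < a + h \<and> b < \<eta> \<and> \<eta> < b + h \<and>
    f (vec2 (a+h) (b+h)) - f (vec2 a (b+h)) - (f (vec2 (a+h) b) - f (vec2 a b)) = h * h * pd 2 (pd 1 f) (vec2 \<xi> \<eta>)"
proof -
  obtain \<xi> where x: "a < \<xi>" "\<xi> < a + h"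
    and e1: "(f (vec2 (a+h) (b+h)) - f (vec2 (a+h) b)) - (f (vec2 a (b+h)) - f (vec2 a b))
         = h * (pd 1 f (vec2 \<xi> (b+h)) - pd 1 f (vec2 \<xi> b))"
    using MVT2[of a "a+h" "\<lambda>s. f (vec2 s (b+h)) - f (vec2 s b)" "\<lambda>s. pd 1 f (vec2 s (b+h)) - pd 1 f (vec2 s b)"]
      line_deriv1_diff[OF f] h by auto
  obtain \<eta> where y: "b < \<eta>" "\<eta> < b + h"
    and e2: "pd 1 f (vec2 \<xi> (b+h)) - pd 1 f (vec2 \<xi> b) = h * pd 2 (pd 1 f) (vec2 \<xi> \<eta>)"
    using MVT2[of b "b+h" "\<lambda>t. pd 1 f (vec2 \<xi> t)" "\<lambda>t. pd 2 (pd 1 f) (vec2 \<xi> t)"]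
      line_deriv2[OF smooth2_diff[OF smooth2_pd[OF f]]] h by auto
  show ?thesis
    by (rule exI[of _ \<xi>], rule exI[of _ \<eta>]) (use x y e1 e2 in \<open>auto simp: algebra_simps\<close>)
qed

lemma schwarz_delta2:
  assumes f: "smooth2 f" and h: "h > 0"
  shows "\<exists>\<xi> \<eta>. a < \<xi> \<and> \<xi> < a + h \<and> b < \<eta> \<and> \<eta> < b + h \<and>
    f (vec2 (a+h) (b+h)) - f (vec2 a (b+h)) - (f (vec2 (a+h) b) - f (vec2 a b)) = h * h * pd 1 (pd 2 f) (vec2 \<xi> \<eta>)"
proof -
  obtain \<eta> where y: "b < \<eta>" "\<eta> < b + h"
    and e1: "(f (vec2 (a+h) (b+h)) - f (vec2 a (b+h))) - (f (vec2 (a+h) b) - f (vec2 a b))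
         = h * (pd 2 f (vec2 (a+h) \<eta>) - pd 2 f (vec2 a \<eta>))"
    using MVT2[of b "b+h" "\<lambda>t. f (vec2 (a+h) t) - f (vec2 a t)" "\<lambda>t. pd 2 f (vec2 (a+h) t) - pd 2 f (vec2 a t)"]
      line_deriv2_diff[OF f] h by auto
  obtain \<xi> where x: "a < \<xi>" "\<xi> < a + h"
    and e2: "pd 2 f (vec2 (a+h) \<eta>) - pd 2 f (vec2 a \<eta>) = h * pd 1 (pd 2 f) (vec2 \<xi> \<eta>)"
    using MVT2[of a "a+h" "\<lambda>s. pd 2 f (vec2 s \<eta>)" "\<lambda>s. pd 1 (pd 2 f) (vec2 s \<eta>)"]
      line_deriv1[OF smooth2_diff[OF smooth2_pd[OF f]]] h by auto
  show ?thesis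
    by (rule exI[of _ \<xi>], rule exI[of _ \<eta>]) (use x y e1 e2 in \<open>auto simp: algebra_simps\<close>)
qed

lemma dist_vec2_le: "dist (vec2 s t) (vec2 a b) \<le> \<bar>s - a\<bar> + \<bar>t - b\<bar>"
proof -
  have "dist (vec2 s t) (vec2 a b) = norm (vec2 s t - vec2 a b)" by (simp add: dist_norm)
  also have "\<dots> \<le> (\<Sum>i\<in>UNIV. \<bar>(vec2 s t - vec2 a b)$i\<bar>)" by (rule norm_le_l1_cart)
  also have "\<dots> = \<bar>s - a\<bar> + \<bar>t - b\<bar>" by (simp add: sum_2)
  finally show ?thesis .
qed

lemma abs_contra: "\<bar>a - b\<bar> < e \<Longrightarrow> \<bar>a - c\<bar> < e \<Longrightarrow> e = \<bar>b - c\<bar> / 2 \<Longrightarrow> False"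
  for a b c e :: real
  by (auto simp: abs_if split: if_splits)

lemma schwarz:
  assumes f: "smooth2 f"
  shows "pd 2 (pd 1 f) x = pd 1 (pd 2 (f :: real^2 \<Rightarrow> real)) x"
proof (rule ccontr)
  define g1 where "g1 = pd 2 (pd 1 f)"
  define g2 where "g2 = pd 1 (pd 2 f)"
  assume ne: "pd 2 (pd 1 f) x \<noteq> pd 1 (pd 2 f) x"
  define e where "e = \<bar>g1 x - g2 x\<bar> / 2"
  have e: "e > 0" using ne by (simp add: e_def g1_def g2_def)
  have c1: "isCont g1 x" "isCont g2 x"
    unfolding g1_def g2_def by (intro smooth2_isCont smooth2_pd f)+
  obtain d1 where d1: "d1 > 0" "\<And>y. dist y x < d1 \<Longrightarrow> dist (g1 y) (g1 x) < e"
    using c1(1) e unfolding continuous_at_eps_delta by blast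
  obtain d2 where d2: "d2 > 0" "\<And>y. dist y x < d2 \<Longrightarrow> dist (g2 y) (g2 x) < e"
    using c1(2) e unfolding continuous_at_eps_delta by blast
  define h where "h = min d1 d2 / 3"
  have h: "h > 0" using d1 d2 by (simp add: h_def)
  define a b where "a = x$1" and "b = x$2"
  have xab: "x = vec2 a b" by (simp add: a_def b_def)
  obtain \<xi>1 \<eta>1 where p1: "a < \<xi>1" "\<xi>1 < a + h" "b < \<eta>1" "\<eta>1 < b + h"
    and q1: "f (vec2 (a+h) (b+h)) - f (vec2 a (b+h)) - (f (vec2 (a+h) b) - f (vec2 a b)) = h * h * g1 (vec2 \<xi>1 \<eta>1)"
    using schwarz_delta1[OF f h, of a b] unfolding g1_def by blast
  obtain \<xi>2 \<eta>2 where p2: "a < \<xi>2" "\<xi>2 < a + h" "b < \<eta>2" "\<eta>2 < b + h"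
    and q2: "f (vec2 (a+h) (b+h)) - f (vec2 a (b+h)) - (f (vec2 (a+h) b) - f (vec2 a b)) = h * h * g2 (vec2 \<xi>2 \<eta>2)"
    using schwarz_delta2[OF f h, of a b] unfolding g2_def by blast
  have eq: "g1 (vec2 \<xi>1 \<eta>1) = g2 (vec2 \<xi>2 \<eta>2)" using q1 q2 h by simp
  have "dist (vec2 \<xi>1 \<eta>1) x \<le> \<bar>\<xi>1 - a\<bar> + \<bar>\<eta>1 - b\<bar>" unfolding xab by (rule dist_vec2_le)
  also have "\<dots> < 3 * h" using p1 h by auto
  finally have "dist (vec2 \<xi>1 \<eta>1) x < d1" using h_def by linarith
  then have i1: "\<bar>g1 (vec2 \<xi>1 \<eta>1) - g1 x\<bar> < e" using d1 by (simp add: dist_real_def)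
  have "dist (vec2 \<xi>2 \<eta>2) x \<le> \<bar>\<xi>2 - a\<bar> + \<bar>\<eta>2 - b\<bar>" unfolding xab by (rule dist_vec2_le)
  also have "\<dots> < 3 * h" using p2 h by auto
  finally have "dist (vec2 \<xi>2 \<eta>2) x < d2" using h_def by linarith
  then have i2: "\<bar>g2 (vec2 \<xi>2 \<eta>2) - g2 x\<bar> < e" using d2 by (simp add: dist_real_def)
  show False using abs_contra[OF i1 i2[folded eq] e_def] .
qed

definition jac :: "(real^2 \<Rightarrow> real^2) \<Rightarrow> real^2 \<Rightarrow> real" where
  "jac P x = pd 1 (\<lambda>y. P y $ 1) x * pd 2 (\<lambda>y. P y $ 2) x - pd 2 (\<lambda>y. P y $ 1) x * pd 1 (\<lambda>y. P y $ 2) x"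

lemma pd_nth: "P differentiable (at x) \<Longrightarrow> pd j (\<lambda>y. P y $ i) x = pd j P x $ i"
  using pd_lin[OF bounded_linear_vec_nth] by blast

lemma map_has_derivative:
  fixes P :: "real^2 \<Rightarrow> real^2"
  assumes "P differentiable (at x)"
  shows "(P has_derivative (\<lambda>h. vec2 (h$1 * pd 1 (\<lambda>y. P y $ 1) x + h$2 * pd 2 (\<lambda>y. P y $ 1) x)
                                    (h$1 * pd 1 (\<lambda>y. P y $ 2) x + h$2 * pd 2 (\<lambda>y. P y $ 2) x))) (at x)"
proof -
  have "(\<lambda>h::real^2. h$1 *\<^sub>R pd 1 P x + h$2 *\<^sub>R pd 2 P x) = (\<lambda>h::real^2. vec2 (h$1 * pd 1 (\<lambda>y. P y $ 1) x + h$2 * pd 2 (\<lambda>y. P y $ 1) x)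
                                    (h$1 * pd 1 (\<lambda>y. P y $ 2) x + h$2 * pd 2 (\<lambda>y. P y $ 2) x))"
    by (rule ext) (simp add: pd_nth[OF assms] vec_eq_iff forall_2)
  then show ?thesis using pd_has_derivative[OF assms] by simp
qed

lemma C_k_vec2: "C_k k f \<Longrightarrow> C_k k g \<Longrightarrow> C_k k (\<lambda>x. vec2 (f x) (g x))"
  unfolding vec2_def by (intro C_k_add C_k_scaleR C_k_const)

lemma smooth2_vec2: "smooth2 f \<Longrightarrow> smooth2 g \<Longrightarrow> smooth2 (\<lambda>x. vec2 (f x) (g x))"
  by (simp add: smooth2_def C_k_vec2)

lemma smooth2_jac:
  fixes P :: "real^2 \<Rightarrow> real^2" shows "smooth2 P \<Longrightarrow> smooth2 (jac P)"
  unfolding jac_def[abs_def]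
  by (intro smooth2_diff2 smooth2_mult smooth2_pd smooth2_nth)

lemma inv2_aux:
  fixes a b c d J k1 k2 :: real
  assumes "J = a * d - b * c" "J \<noteq> 0"
  shows "(d * k1 - b * k2) / J * a + (- c * k1 + a * k2) / J * b = k1"
    and "(d * k1 - b * k2) / J * c + (- c * k1 + a * k2) / J * d = k2"
proof -
  have "(d * k1 - b * k2) / J * a + (- c * k1 + a * k2) / J * b = ((d * k1 - b * k2) * a + (- c * k1 + a * k2) * b) / J"
    by (simp add: add_divide_distrib)
  also have "\<dots> = k1 * J / J" by (simp add: assms(1) algebra_simps)
  finally show "(d * k1 - b * k2) / J * a + (- c * k1 + a * k2) / J * b = k1" using assms(2) by simp
  have "(d * k1 - b * k2) / J * c + (- c * k1 + a * k2) / J * d = ((d * k1 - b * k2) * c + (- c * k1 + a * k2) * d) / J"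
    by (simp add: add_divide_distrib)
  also have "\<dots> = k2 * J / J" by (simp add: assms(1) algebra_simps)
  finally show "(d * k1 - b * k2) / J * c + (- c * k1 + a * k2) / J * d = k2" using assms(2) by simp
qed

lemma inverse_map_deriv:
  fixes P :: "real^2 \<Rightarrow> real^2"
  assumes P: "smooth2 P" and GP: "\<forall>x. G (P x) = x" and PG: "\<forall>y. P (G y) = y"
    and J: "\<forall>x. jac P x \<noteq> 0"
  shows "(G has_derivative (\<lambda>k. vec2 ((pd 2 (\<lambda>y. P y $ 2) (G y) * k$1 - pd 2 (\<lambda>y. P y $ 1) (G y) * k$2) / jac P (G y))
                                     ((- pd 1 (\<lambda>y. P y $ 2) (G y) * k$1 + pd 1 (\<lambda>y. P y $ 1) (G y) * k$2) / jac P (G y)))) (at y)"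
proof -
  define x where "x = G y"
  define a where "a = pd 1 (\<lambda>y. P y $ 1) x"
  define b where "b = pd 2 (\<lambda>y. P y $ 1) x"
  define c where "c = pd 1 (\<lambda>y. P y $ 2) x"
  define d where "d = pd 2 (\<lambda>y. P y $ 2) x"
  have Jx: "a * d - b * c \<noteq> 0" using J unfolding jac_def a_def b_def c_def d_def by blast
  have dP: "(P has_derivative (\<lambda>h. vec2 (h$1 * a + h$2 * b) (h$1 * c + h$2 * d))) (at x)"
    using map_has_derivative[OF smooth2_diff[OF P]] unfolding a_def b_def c_def d_def .
  have "(G has_derivative (\<lambda>k. vec2 ((d * k$1 - b * k$2) / (a * d - b * c)) ((- c * k$1 + a * k$2) / (a * d - b * c)))) (at (P x))"
  proof (rule has_derivative_inverse_strong[OF open_UNIV UNIV_I _ _ dP])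
    show "continuous_on UNIV P" using P smooth2_cont by blast
    show "\<And>x. x \<in> UNIV \<Longrightarrow> G (P x) = x" using GP by blast
    show "(\<lambda>h. vec2 (h$1 * a + h$2 * b) (h$1 * c + h$2 * d)) \<circ>
        (\<lambda>k. vec2 ((d * k$1 - b * k$2) / (a * d - b * c)) ((- c * k$1 + a * k$2) / (a * d - b * c))) = id"
    proof (rule ext)
      fix k :: "real^2"
      note i = inv2_aux[OF refl Jx, of "k$1" "k$2"]
      show "((\<lambda>h. vec2 (h$1 * a + h$2 * b) (h$1 * c + h$2 * d)) \<circ>
        (\<lambda>k. vec2 ((d * k$1 - b * k$2) / (a * d - b * c)) ((- c * k$1 + a * k$2) / (a * d - b * c)))) k = id k"
        using i by (simp add: vec_eq_iff forall_2)
    qed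
  qed
  moreover have "P x = y" using PG x_def by simp
  ultimately show ?thesis
    by (simp add: x_def a_def b_def c_def d_def jac_def)
qed

lemma C_k_inverse_map:
  fixes P :: "real^2 \<Rightarrow> real^2"
  assumes P: "smooth2 P" and GP: "\<forall>x. G (P x) = x" and PG: "\<forall>y. P (G y) = y"
    and J: "\<forall>x. jac P x \<noteq> 0"
  shows "C_k k G"
proof (induction k)
  have diff: "G differentiable (at y)" for y
    using inverse_map_deriv[OF assms] by (auto simp: differentiable_def)
  case 0 show ?case by simp (rule diff_cont, use diff in blast)
  case (Suc k)
  let ?a = "pd 1 (\<lambda>y. P y $ 1)" and ?b = "pd 2 (\<lambda>y. P y $ 1)"
    and ?c = "pd 1 (\<lambda>y. P y $ 2)" and ?d = "pd 2 (\<lambda>y. P y $ 2)"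
  have sm: "smooth2 ?a" "smooth2 ?b" "smooth2 ?c" "smooth2 ?d" "smooth2 (jac P)"
    using P by (auto intro: smooth2_pd smooth2_nth smooth2_jac)
  have cG: "C_k k (\<lambda>y. g (G y))" if "smooth2 g" for g :: "real^2 \<Rightarrow> real"
    by (rule C_k_comp[OF smooth2_C_k[OF that] Suc.IH])
  have cJ: "C_k k (\<lambda>y. inverse (jac P (G y)))"
    using C_k_inverse[OF cG[OF sm(5)]] J by blast
  have p1: "pd 1 G = (\<lambda>y. vec2 (?d (G y) * inverse (jac P (G y))) (- ?c (G y) * inverse (jac P (G y))))"
    by (rule ext) (simp add: pd_at[OF inverse_map_deriv[OF assms]] divide_inverse)
  have p2: "pd 2 G = (\<lambda>y. vec2 (- ?b (G y) * inverse (jac P (G y))) (?a (G y) * inverse (jac P (G y))))"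
    by (rule ext) (simp add: pd_at[OF inverse_map_deriv[OF assms]] divide_inverse)
  have "C_k k (pd 1 G)" unfolding p1
    by (intro C_k_vec2 C_k_mult C_k_uminus cJ cG sm)
  moreover have "C_k k (pd 2 G)" unfolding p2
    by (intro C_k_vec2 C_k_mult C_k_uminus cJ cG sm)
  ultimately show ?case unfolding C_k_Suc using diff by (metis exhaust_2)
qed

lemma smooth2_inverse_map:
  assumes "smooth2 P" "\<forall>x. G (P x) = x" "\<forall>y. P (G y) = y" "\<forall>x. jac P x \<noteq> 0"
  shows "smooth2 G"
  using C_k_inverse_map[OF assms] by (simp add: smooth2_def)

lemma shift_nat:
  fixes f :: "real \<Rightarrow> real"
  assumes "\<forall>s. f (s + 1) = f s + c"
  shows "f (s + real n) = f s + real n * c"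
proof (induction n)
  case 0 then show ?case by simp
next
  case (Suc n)
  have "f (s + real (Suc n)) = f ((s + real n) + 1)" by (simp add: ac_simps)
  also have "\<dots> = f (s + real n) + c" using assms by blast
  finally show ?case using Suc by (simp add: algebra_simps)
qed

lemma shift_int:
  fixes f :: "real \<Rightarrow> real"
  assumes "\<forall>s. f (s + 1) = f s + c"
  shows "f (s + of_int m) = f s + of_int m * c"
proof (cases "m \<ge> 0")
  case True
  then obtain n where "m = int n" by (metis nonneg_eq_int)
  then show ?thesis using shift_nat[OF assms] by simp
next
  case False
  obtain n where n: "m = - int n" by (rule that[of "nat (-m)"]) (use False in simp)
  have "f ((s - real n) + real n) = f (s - real n) + real n * c" using shift_nat[OF assms] .
  then show ?thesis using n by simp
qed

lemma surj_shift:
  fixes f :: "real \<Rightarrow> real"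
  assumes d: "\<forall>s. DERIV f s :> f' s" and sh: "\<forall>s. f (s + 1) = f s + c" and c: "c > 0"
  shows "\<exists>s. f s = y"
proof -
  define n where "n = nat \<lceil>\<bar>y - f 0\<bar> / c\<rceil>"
  have "real n \<ge> \<bar>y - f 0\<bar> / c" unfolding n_def by linarith
  then have nc: "real n * c \<ge> \<bar>y - f 0\<bar>" using c by (simp add: field_simps)
  have up: "f (0 + real n) = f 0 + real n * c" using shift_nat[OF sh] .
  have "f ((- real n) + real n) = f (- real n) + real n * c" using shift_nat[OF sh] .
  then have lo: "f (- real n) = f 0 - real n * c" by simp
  have cont: "continuous_on {- real n .. real n} f"
    using d by (meson DERIV_isCont continuous_at_imp_continuous_on)
  have "f (- real n) \<le> y" "y \<le> f (real n)" using up lo nc by auto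
  then show ?thesis using IVT'[OF _ _ _ cont] by fastforce
qed

lemma strict_from_deriv:
  fixes f :: "real \<Rightarrow> real"
  assumes d: "\<forall>s. DERIV f s :> f' s" and p: "\<forall>s. f' s > 0"
  shows "a < b \<Longrightarrow> f a < f b"
  by (rule DERIV_pos_imp_increasing) (use d p in blast)+

lemma inj_from_deriv:
  fixes f :: "real \<Rightarrow> real"
  assumes d: "\<forall>s. DERIV f s :> f' s" and p: "\<forall>s. f' s > 0"
  shows "f a = f b \<Longrightarrow> a = b"
  using strict_from_deriv[OF d p, of a b] strict_from_deriv[OF d p, of b a]
  by (metis less_irrefl linorder_neqE)

lemma const_from_deriv:
  fixes g :: "real \<Rightarrow> real"
  assumes "\<forall>s. DERIV g s :> 0" shows "g s = g 0"
  using DERIV_isconst_all[OF assms] by blast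

lemma DERIV_shift:
  assumes "DERIV f (t + c) :> D" shows "DERIV (\<lambda>t. f (t + c)) t :> D"
proof -
  have "DERIV (\<lambda>t. t + c) t :> 1" by (auto intro!: derivative_eq_intros)
  from DERIV_chain2[OF assms this] show ?thesis by simp
qed

lemma pd2_line:
  assumes "g differentiable (at x)" "DERIV (\<lambda>t. g (vec2 (x$1) t)) (x$2) :> D"
  shows "pd 2 g x = D"
  using DERIV_unique[OF line_deriv2[of g "x$1" "x$2"] assms(2)] assms(1) by simp

lemma pd1_line:
  assumes "g differentiable (at x)" "DERIV (\<lambda>s. g (vec2 s (x$2))) (x$1) :> D"
  shows "pd 1 g x = D"
  using DERIV_unique[OF line_deriv1[of g "x$1" "x$2"] assms(2)] assms(1) by simp

section \<open>Rosenblatt map\<close>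

definition dens :: "(real^2 \<Rightarrow> real) \<Rightarrow> bool" where
  "dens F \<longleftrightarrow> smooth2 F \<and> periodic2 F \<and> (\<forall>x. F x > 0)"

definition MM :: "(real^2 \<Rightarrow> real) \<Rightarrow> real \<Rightarrow> real" where
  "MM F a = Iop F (vec2 a 1)"

definition CC :: "(real^2 \<Rightarrow> real) \<Rightarrow> real \<Rightarrow> real" where
  "CC F s = Iop (\<lambda>y. MM F (y$2)) (vec2 0 s)"

definition KK :: "(real^2 \<Rightarrow> real) \<Rightarrow> real" where
  "KK F = CC F 1"

definition Psi :: "(real^2 \<Rightarrow> real) \<Rightarrow> real^2 \<Rightarrow> real^2" where
  "Psi F x = vec2 (CC F (x$1) / KK F) (Iop F x / MM F (x$1))"

lemma lattice_vec2: "lattice_equiv (vec2 (a + of_int m) (b + of_int n)) (vec2 a b)"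
  unfolding lattice_equiv_def by (simp add: forall_2)

lemma dens_per: "dens F \<Longrightarrow> F (vec2 (a + of_int m) (b + of_int n)) = F (vec2 a b)"
  using lattice_vec2 unfolding dens_def periodic2_def by blast

lemma dens_per1: "dens F \<Longrightarrow> F (vec2 (a + of_int m) b) = F (vec2 a b)"
  using dens_per[of F a m b 0] by simp

lemma dens_per2: "dens F \<Longrightarrow> F (vec2 a (b + 1)) = F (vec2 a b)"
  using dens_per[of F a 0 b 1] by simp

context
  fixes F :: "real^2 \<Rightarrow> real"
  assumes F: "dens F"
begin

lemma Fs: "smooth2 F" and Fpos: "F x > 0" using F by (auto simp: dens_def)

lemma H_smooth: "smooth2 (Iop F)" using smooth2_Iop[OF Fs] .

lemma H_deriv: "DERIV (\<lambda>t. Iop F (vec2 a t)) t :> F (vec2 a t)"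
  using line_deriv2[OF smooth2_diff[OF H_smooth]] Iop_props[OF Fs] by metis

lemma H_zero: "Iop F (vec2 a 0) = 0" by (simp add: Iop_def)

lemma H_per1: "Iop F (vec2 (a + of_int m) t) = Iop F (vec2 a t)"
proof -
  have "F (vec2 (a + of_int m) (t * s)) = F (vec2 a (t * s))" for s
    using dens_per1[OF F] by simp
  then show ?thesis by (simp add: Iop_def)
qed

lemma H_mono: "s < t \<Longrightarrow> Iop F (vec2 a s) < Iop F (vec2 a t)"
  using strict_from_deriv[of "\<lambda>t. Iop F (vec2 a t)" "\<lambda>t. F (vec2 a t)"] H_deriv Fpos by blast

lemma M_pos: "MM F a > 0"
  using H_mono[of 0 1 a] H_zero by (simp add: MM_def)

lemma M_per: "MM F (a + of_int m) = MM F a"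
  by (simp add: MM_def H_per1)

lemma H_shift1: "Iop F (vec2 a (t + 1)) = Iop F (vec2 a t) + MM F a"
proof -
  define g where "g t = Iop F (vec2 a (t + 1)) - Iop F (vec2 a t)" for t
  have "DERIV g t :> F (vec2 a (t+1)) - F (vec2 a t)" for t
    unfolding g_def by (intro DERIV_diff DERIV_shift H_deriv)
  moreover have "F (vec2 a (t+1)) = F (vec2 a t)" for t
    using dens_per2[OF F] by simp
  ultimately have "DERIV g t :> 0" for t by simp
  then have "g t = g 0" using const_from_deriv by blast
  then show ?thesis by (simp add: g_def H_zero MM_def)
qed

lemma H_shift: "Iop F (vec2 a (t + of_int n)) = Iop F (vec2 a t) + of_int n * MM F a"
  using shift_int[of "\<lambda>t. Iop F (vec2 a t)" "MM F a" t n] H_shift1 by blast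

lemma M1_smooth: "smooth2 (\<lambda>y. MM F (y$2))"
  unfolding MM_def
  by (intro smooth2_comp[OF H_smooth] smooth2_vec2 smooth2_nth smooth2_id smooth2_const)

lemma C_deriv: "DERIV (CC F) s :> MM F s"
proof -
  have "DERIV (\<lambda>s. Iop (\<lambda>y. MM F (y$2)) (vec2 0 s)) s :> pd 2 (Iop (\<lambda>y. MM F (y$2))) (vec2 0 s)"
    by (rule line_deriv2[OF smooth2_diff[OF smooth2_Iop[OF M1_smooth]]])
  then show ?thesis using Iop_props[OF M1_smooth] by (simp add: CC_def[abs_def])
qed

lemma C_zero: "CC F 0 = 0" by (simp add: CC_def Iop_def)

lemma C_mono: "s < t \<Longrightarrow> CC F s < CC F t"
  using strict_from_deriv[of "CC F" "MM F"] C_deriv M_pos by blast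

lemma K_pos: "KK F > 0" using C_mono[of 0 1] C_zero by (simp add: KK_def)

lemma C_shift1: "CC F (s + 1) = CC F s + KK F"
proof -
  define g where "g s = CC F (s + 1) - CC F s" for s
  have "DERIV g s :> MM F (s+1) - MM F s" for s
    unfolding g_def by (intro DERIV_diff DERIV_shift C_deriv)
  moreover have "MM F (s+1) = MM F s" for s using M_per[of s 1] by simp
  ultimately have "DERIV g s :> 0" for s by simp
  then have "g s = g 0" using const_from_deriv by blast
  then show ?thesis by (simp add: g_def C_zero KK_def)
qed

lemma C_shift: "CC F (s + of_int m) = CC F s + of_int m * KK F"
  using shift_int[of "CC F" "KK F" s m] C_shift1 by blast

lemma Psi_smooth: "smooth2 (Psi F)"
proof -
  have "smooth2 (\<lambda>x. CC F (x$1))"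
    unfolding CC_def
    by (intro smooth2_comp[OF smooth2_Iop[OF M1_smooth]] smooth2_vec2 smooth2_nth smooth2_id smooth2_const)
  moreover have "smooth2 (\<lambda>x. MM F (x$1))"
    unfolding MM_def
    by (intro smooth2_comp[OF H_smooth] smooth2_vec2 smooth2_nth smooth2_id smooth2_const)
  moreover have "\<forall>x. MM F (x$1) \<noteq> 0" "\<forall>x::real^2. KK F \<noteq> 0"
    using M_pos K_pos by (metis less_irrefl)+
  ultimately show ?thesis
    unfolding Psi_def[abs_def]
    by (intro smooth2_vec2 smooth2_divide H_smooth smooth2_const)
qed

lemma Psi_jac: "jac (Psi F) x = F x / KK F"
proof -
  have d1: "(\<lambda>y. Psi F y $ 1) differentiable (at x)" "(\<lambda>y. Psi F y $ 2) differentiable (at x)"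
    using smooth2_diff[OF smooth2_nth[OF Psi_smooth]] by blast+
  have a: "pd 1 (\<lambda>y. Psi F y $ 1) x = MM F (x$1) / KK F"
    by (rule pd1_line[OF d1(1)]) (use DERIV_cdivide[OF C_deriv[of "x$1"], where c="KK F"] in \<open>simp add: Psi_def\<close>)
  have b: "pd 2 (\<lambda>y. Psi F y $ 1) x = 0"
    by (rule pd2_line[OF d1(1)]) (simp add: Psi_def)
  have d: "pd 2 (\<lambda>y. Psi F y $ 2) x = F x / MM F (x$1)"
  proof (rule pd2_line[OF d1(2)])
    show "DERIV (\<lambda>t. Psi F (vec2 (x$1) t) $ 2) (x$2) :> F x / MM F (x$1)"
      using DERIV_cdivide[OF H_deriv[of "x$1" "x$2"], where c="MM F (x$1)"] by (simp add: Psi_def)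
  qed
  show ?thesis unfolding jac_def a b d using M_pos[of "x$1"] by simp
qed

lemma Psi_shift: "Psi F (x + vec2 (of_int m) (of_int n)) = Psi F x + vec2 (of_int m) (of_int n)"
proof -
  have x: "x + vec2 (of_int m) (of_int n) = vec2 (x$1 + of_int m) (x$2 + of_int n)"
    by (simp add: vec_eq_iff forall_2)
  have "Iop F (vec2 (x$1 + of_int m) (x$2 + of_int n)) = Iop F x + of_int n * MM F (x$1)"
    using H_per1 H_shift M_per by simp
  moreover have "MM F (x$1 + of_int m) = MM F (x$1)" by (rule M_per)
  moreover have "CC F (x$1 + of_int m) = CC F (x$1) + of_int m * KK F" by (rule C_shift)
  ultimately show ?thesis
    using K_pos M_pos[of "x$1"]
    by (simp add: x Psi_def vec_eq_iff forall_2 add_divide_distrib)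
qed

lemma Psi_inj: "Psi F x = Psi F y \<Longrightarrow> x = y"
proof -
  assume e: "Psi F x = Psi F y"
  then have "CC F (x$1) / KK F = CC F (y$1) / KK F" by (metis Psi_def vec2_nth(1))
  then have "CC F (x$1) = CC F (y$1)" using K_pos by simp
  then have 1: "x$1 = y$1" using inj_from_deriv[OF _ _ ] C_deriv M_pos by blast
  have "Iop F x / MM F (x$1) = Iop F y / MM F (y$1)" using e by (metis Psi_def vec2_nth(2))
  then have "Iop F x = Iop F y" using 1 M_pos[of "y$1"] by simp
  then have "Iop F (vec2 (x$1) (x$2)) = Iop F (vec2 (x$1) (y$2))" using 1 by (metis vec2_eta2)
  then have 2: "x$2 = y$2" using inj_from_deriv[of "\<lambda>t. Iop F (vec2 (x$1) t)" "\<lambda>t. F (vec2 (x$1) t)"] H_deriv Fpos by blast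
  show "x = y" using 1 2 by (simp add: vec_eq_iff forall_2)
qed

lemma Psi_surj: "\<exists>x. Psi F x = y"
proof -
  obtain s where s: "CC F s = y$1 * KK F"
    using surj_shift[of "CC F" "MM F" "KK F"] C_deriv C_shift1 K_pos by blast
  obtain t where t: "Iop F (vec2 s t) = y$2 * MM F s"
    using surj_shift[of "\<lambda>t. Iop F (vec2 s t)" "\<lambda>t. F (vec2 s t)" "MM F s"] H_deriv H_shift1 M_pos by blast
  have "Psi F (vec2 s t) = y"
    using s t K_pos M_pos[of s] by (simp add: Psi_def vec_eq_iff forall_2)
  then show ?thesis by blast
qed

end

lemma div_alg:
  fixes a b c d a1 a2 b1 b2 c1 c2 d1 d2 u1 u2 u11 u12 u21 u22 J iJ J1 J2 iJ1 iJ2 P1 P2 P11 P12 P21 P22 G11 G12 G21 G22 :: real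
  assumes J0: "J \<noteq> 0" and hJ: "J = a * d - b * c" and hiJ: "iJ = inverse J"
    and s1: "a2 = b1" and s2: "c2 = d1"
    and hJ1: "J1 = a * d1 + a1 * d - (b * c1 + b1 * c)"
    and hJ2: "J2 = a * d2 + a2 * d - (b * c2 + b2 * c)"
    and hiJ1: "iJ1 = - (J1 * (iJ * iJ))" and hiJ2: "iJ2 = - (J2 * (iJ * iJ))"
    and hP1: "P1 = a * u1 + b * u2" and hP2: "P2 = c * u1 + d * u2"
    and hP11: "P11 = a * u11 + a1 * u1 + (b * u21 + b1 * u2)"
    and hP12: "P12 = a * u12 + a2 * u1 + (b * u22 + b2 * u2)"
    and hP21: "P21 = c * u11 + c1 * u1 + (d * u21 + d1 * u2)"
    and hP22: "P22 = c * u12 + c2 * u1 + (d * u22 + d2 * u2)"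
    and hG11: "G11 = P1 * iJ1 + P11 * iJ" and hG12: "G12 = P1 * iJ2 + P12 * iJ"
    and hG21: "G21 = P2 * iJ1 + P21 * iJ" and hG22: "G22 = P2 * iJ2 + P22 * iJ"
  shows "(d / J) * G11 + (- c / J) * G12 + ((- b / J) * G21 + (a / J) * G22) = (u11 + u22) / J"
proof -
  have e: "J * J * J * ((d / J) * G11 + (- c / J) * G12 + ((- b / J) * G21 + (a / J) * G22))
   = J * (d * (a1 * u1 + a * u11 + b1 * u2 + b * u21) - c * (a2 * u1 + a * u12 + b2 * u2 + b * u22) - b * (c1 * u1 + c * u11 + d1 * u2 + d * u21) + a * (c2 * u1 + c * u12 + d2 * u2 + d * u22))
     - (d * (a * u1 + b * u2) * (a1 * d + a * d1 - b1 * c - b * c1) - c * (a * u1 + b * u2) * (a2 * d + a * d2 - b2 * c - b * c2) - b * (c * u1 + d * u2) * (a1 * d + a * d1 - b1 * c - b * c1) + a * (c * u1 + d * u2) * (a2 * d + a * d2 - b2 * c - b * c2))"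
    using J0 unfolding hG11 hG12 hG21 hG22 hiJ1 hiJ2 hJ1 hJ2 hP1 hP2 hP11 hP12 hP21 hP22 hiJ
    by (simp add: field_simps)
  also have "\<dots> = J * J * J * ((u11 + u22) / J)"
    using J0 unfolding s1 s2 hJ by (simp add: field_simps)
  finally have X: "J * J * J * ((d / J) * G11 + (- c / J) * G12 + ((- b / J) * G21 + (a / J) * G22)) = J * J * J * ((u11 + u22) / J)" .
  show ?thesis by (rule mult_left_cancel[THEN iffD1, OF _ X]) (use J0 in simp)
qed

lemma pd_mult_s: "smooth2 f \<Longrightarrow> smooth2 g \<Longrightarrow> pd i (\<lambda>x. f x * g x) x = f x * pd i g x + pd i f x * (g x :: real)"
  by (rule pd_bil[OF bounded_bilinear_mult smooth2_diff smooth2_diff])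

lemma pd_add_s: "smooth2 f \<Longrightarrow> smooth2 g \<Longrightarrow> pd i (\<lambda>x. f x + g x) x = pd i f x + pd i g x"
  by (rule pd_add[OF smooth2_diff smooth2_diff])

lemma pd_diff_s: "smooth2 f \<Longrightarrow> smooth2 g \<Longrightarrow> pd i (\<lambda>x. f x - g x) x = pd i f x - pd i (g :: _ \<Rightarrow> real) x"
proof -
  assume f: "smooth2 f" and g: "smooth2 g"
  have "pd i (\<lambda>x. f x + (- g x)) x = pd i f x + pd i (\<lambda>x. - g x) x"
    using pd_add_s[OF f smooth2_uminus[OF g]] .
  moreover have "pd i (\<lambda>x. - g x) x = - pd i g x"
    using pd_lin[OF bounded_linear_minus[OF bounded_linear_ident] smooth2_diff[OF g]] by simp
  ultimately show ?thesis by simp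
qed

lemma pd_inv_s: "smooth2 g \<Longrightarrow> g x \<noteq> 0 \<Longrightarrow> pd i (\<lambda>x. inverse (g x :: real)) x = - (pd i g x * (inverse (g x) * inverse (g x)))"
proof -
  assume g: "smooth2 g" and nz: "g x \<noteq> 0"
  have "((\<lambda>x. inverse (g x)) has_derivative (\<lambda>h. - (inverse (g x) * frechet_derivative g (at x) h * inverse (g x)))) (at x)"
    using has_derivative_compose[OF fd_works[OF smooth2_diff[OF g]] has_derivative_inverse'[OF nz]] by simp
  from pd_at[OF this] show ?thesis by (simp add: pd_def)
qed

lemma fd_map:
  fixes P :: "real^2 \<Rightarrow> real^2"
  assumes "P differentiable (at x)"
  shows "frechet_derivative P (at x) h = vec2 (h$1 * pd 1 (\<lambda>y. P y $ 1) x + h$2 * pd 2 (\<lambda>y. P y $ 1) x)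
                                    (h$1 * pd 1 (\<lambda>y. P y $ 2) x + h$2 * pd 2 (\<lambda>y. P y $ 2) x)"
  by (simp add: frechet_derivative_at[OF map_has_derivative[OF assms], symmetric])

lemma divergence_pd: "divergence u x = pd 1 (\<lambda>y. u y $ 1) x + pd 2 (\<lambda>y. u y $ 2) x"
  by (simp add: divergence_def sum_2 pd_def)

lemma div_transport:
  fixes Z W v :: "real^2 \<Rightarrow> real^2" and r1 r2 :: "real^2 \<Rightarrow> real"
  assumes Z: "smooth2 Z" and W: "smooth2 W" and ZW: "\<forall>z. Z (W z) = z" and WZ: "\<forall>x. W (Z x) = x"
    and J: "\<forall>x. jac Z x \<noteq> 0" and dn: "\<forall>x. r2 (Z x) * jac Z x = r1 x"
    and r1: "smooth2 r1" and v: "smooth2 v"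
    and div0: "\<forall>x. divergence (\<lambda>y. r1 y *\<^sub>R v y) x = 0"
  shows "divergence (\<lambda>y. r2 y *\<^sub>R pushforward Z W v y) z = 0"
proof -
  define a where "a = pd 1 (\<lambda>y. Z y $ 1)"
  define b where "b = pd 2 (\<lambda>y. Z y $ 1)"
  define c where "c = pd 1 (\<lambda>y. Z y $ 2)"
  define d where "d = pd 2 (\<lambda>y. Z y $ 2)"
  define u1 where "u1 y = r1 y * v y $ 1" for y
  define u2 where "u2 y = r1 y * v y $ 2" for y
  define iJ where "iJ y = inverse (jac Z y)" for y
  define P1 where "P1 y = a y * u1 y + b y * u2 y" for y
  define P2 where "P2 y = c y * u1 y + d y * u2 y" for y
  define g1 where "g1 y = P1 y * iJ y" for y
  define g2 where "g2 y = P2 y * iJ y" for y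
  have sa: "smooth2 a" "smooth2 b" "smooth2 c" "smooth2 d"
    unfolding a_def b_def c_def d_def by (intro smooth2_pd smooth2_nth Z)+
  have su: "smooth2 u1" "smooth2 u2"
    unfolding u1_def[abs_def] u2_def[abs_def] by (intro smooth2_mult r1 smooth2_nth v)+
  have sJ: "smooth2 (jac Z)" by (rule smooth2_jac[OF Z])
  have jacE: "jac Z y = a y * d y - b y * c y" for y by (simp add: jac_def a_def b_def c_def d_def)
  have siJ: "smooth2 iJ" unfolding iJ_def[abs_def] using smooth2_inverse[OF sJ] J by blast
  have sP: "smooth2 P1" "smooth2 P2"
    unfolding P1_def[abs_def] P2_def[abs_def] by (intro smooth2_add smooth2_mult sa su)+
  have sg: "smooth2 g1" "smooth2 g2"
    unfolding g1_def[abs_def] g2_def[abs_def] by (intro smooth2_mult sP siJ)+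
  have wform: "r2 y *\<^sub>R pushforward Z W v y = vec2 (g1 (W y)) (g2 (W y))" for y
  proof -
    define x where "x = W y"
    have y: "y = Z x" using ZW x_def by simp
    have r2: "r2 y = r1 x * iJ x" using dn J y by (simp add: iJ_def field_simps)
    have "pushforward Z W v y = vec2 (v x $1 * a x + v x $2 * b x) (v x $1 * c x + v x $2 * d x)"
      unfolding pushforward_def x_def[symmetric]
      by (simp add: fd_map[OF smooth2_diff[OF Z]] a_def b_def c_def d_def)
    then show ?thesis
      by (simp add: r2 g1_def g2_def P1_def P2_def u1_def u2_def x_def[symmetric] vec2_def algebra_simps)
  qed
  have comp1: "(\<lambda>y. (r2 y *\<^sub>R pushforward Z W v y) $ 1) = (\<lambda>y. g1 (W y))"
    and comp2: "(\<lambda>y. (r2 y *\<^sub>R pushforward Z W v y) $ 2) = (\<lambda>y. g2 (W y))"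
    by (rule ext, simp only: wform vec2_nth)+
  define x where "x = W z"
  have Jx: "jac Z x \<noteq> 0" using J by blast
  have dW: "(W has_derivative (\<lambda>k. vec2 ((d x * k$1 - b x * k$2) / jac Z x) ((- c x * k$1 + a x * k$2) / jac Z x))) (at z)"
    using inverse_map_deriv[OF Z WZ ZW J, of z] unfolding x_def a_def b_def c_def d_def .
  have W1: "pd 1 W z = vec2 (d x / jac Z x) (- c x / jac Z x)" using pd_at[OF dW] by simp
  have W2: "pd 2 W z = vec2 (- b x / jac Z x) (a x / jac Z x)" using pd_at[OF dW] by simp
  have cg: "pd i (\<lambda>y. g (W y)) z = (pd i W z)$1 * pd 1 g x + (pd i W z)$2 * pd 2 g x" if "smooth2 g" for g i
    using pd_comp[OF smooth2_diff[OF W] smooth2_diff[OF that]] by (simp add: x_def)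
  have "divergence (\<lambda>y. r2 y *\<^sub>R pushforward Z W v y) z = pd 1 (\<lambda>y. g1 (W y)) z + pd 2 (\<lambda>y. g2 (W y)) z"
    by (simp only: divergence_pd comp1 comp2)
  also have "\<dots> = (d x / jac Z x) * pd 1 g1 x + (- c x / jac Z x) * pd 2 g1 x
                 + ((- b x / jac Z x) * pd 1 g2 x + (a x / jac Z x) * pd 2 g2 x)"
    by (simp add: cg sg W1 W2)
  also have "\<dots> = (pd 1 u1 x + pd 2 u2 x) / jac Z x"
  proof (rule div_alg[OF Jx jacE])
    show "pd 2 a x = pd 1 b x" unfolding a_def b_def by (rule schwarz[OF smooth2_nth[OF Z]])
    show "pd 2 c x = pd 1 d x" unfolding c_def d_def by (rule schwarz[OF smooth2_nth[OF Z]])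
    have pJ: "pd i (jac Z) x = a x * pd i d x + pd i a x * d x - (b x * pd i c x + pd i b x * c x)" for i
    proof -
      have "pd i (jac Z) x = pd i (\<lambda>y. a y * d y - b y * c y) x"
        by (simp add: jacE[abs_def])
      also have "\<dots> = pd i (\<lambda>y. a y * d y) x - pd i (\<lambda>y. b y * c y) x"
        by (rule pd_diff_s) (intro smooth2_mult sa)+
      finally show ?thesis by (simp add: pd_mult_s sa)
    qed
    show "pd 1 (jac Z) x = a x * pd 1 d x + pd 1 a x * d x - (b x * pd 1 c x + pd 1 b x * c x)" by (rule pJ)
    show "pd 2 (jac Z) x = a x * pd 2 d x + pd 2 a x * d x - (b x * pd 2 c x + pd 2 b x * c x)" by (rule pJ)
    have piJ: "pd i iJ x = - (pd i (jac Z) x * (iJ x * iJ x))" for i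
      unfolding iJ_def[abs_def] by (rule pd_inv_s[OF sJ Jx])
    show "pd 1 iJ x = - (pd 1 (jac Z) x * (iJ x * iJ x))" by (rule piJ)
    show "pd 2 iJ x = - (pd 2 (jac Z) x * (iJ x * iJ x))" by (rule piJ)
    show "P1 x = a x * u1 x + b x * u2 x" "P2 x = c x * u1 x + d x * u2 x" by (simp_all add: P1_def P2_def)
    have pP1: "pd i P1 x = a x * pd i u1 x + pd i a x * u1 x + (b x * pd i u2 x + pd i b x * u2 x)" for i
      unfolding P1_def[abs_def] by (simp add: pd_add_s pd_mult_s sa su smooth2_mult)
    have pP2: "pd i P2 x = c x * pd i u1 x + pd i c x * u1 x + (d x * pd i u2 x + pd i d x * u2 x)" for i
      unfolding P2_def[abs_def] by (simp add: pd_add_s pd_mult_s sa su smooth2_mult)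
    show "pd 1 P1 x = a x * pd 1 u1 x + pd 1 a x * u1 x + (b x * pd 1 u2 x + pd 1 b x * u2 x)" by (rule pP1)
    show "pd 2 P1 x = a x * pd 2 u1 x + pd 2 a x * u1 x + (b x * pd 2 u2 x + pd 2 b x * u2 x)" by (rule pP1)
    show "pd 1 P2 x = c x * pd 1 u1 x + pd 1 c x * u1 x + (d x * pd 1 u2 x + pd 1 d x * u2 x)" by (rule pP2)
    show "pd 2 P2 x = c x * pd 2 u1 x + pd 2 c x * u1 x + (d x * pd 2 u2 x + pd 2 d x * u2 x)" by (rule pP2)
    have pg1: "pd i g1 x = P1 x * pd i iJ x + pd i P1 x * iJ x" for i
      unfolding g1_def[abs_def] by (rule pd_mult_s[OF sP(1) siJ])
    have pg2: "pd i g2 x = P2 x * pd i iJ x + pd i P2 x * iJ x" for i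
      unfolding g2_def[abs_def] by (rule pd_mult_s[OF sP(2) siJ])
    show "pd 1 g1 x = P1 x * pd 1 iJ x + pd 1 P1 x * iJ x" by (rule pg1)
    show "pd 2 g1 x = P1 x * pd 2 iJ x + pd 2 P1 x * iJ x" by (rule pg1)
    show "pd 1 g2 x = P2 x * pd 1 iJ x + pd 1 P2 x * iJ x" by (rule pg2)
    show "pd 2 g2 x = P2 x * pd 2 iJ x + pd 2 P2 x * iJ x" by (rule pg2)
    show "iJ x = inverse (jac Z x)" by (simp add: iJ_def)
  qed
  also have "pd 1 u1 x + pd 2 u2 x = 0"
  proof -
    have "(\<lambda>y. (r1 y *\<^sub>R v y) $ 1) = u1" "(\<lambda>y. (r1 y *\<^sub>R v y) $ 2) = u2"
      by (auto simp: u1_def u2_def)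
    then show ?thesis using div0 divergence_pd by metis
  qed
  finally show ?thesis by simp
qed

lemma jac_comp:
  fixes Q R :: "real^2 \<Rightarrow> real^2"
  assumes Q: "smooth2 Q" and R: "smooth2 R"
  shows "jac (\<lambda>x. Q (R x)) x = jac Q (R x) * jac R x"
proof -
  have c: "pd i (\<lambda>x. Q (R x) $ j) x = pd i (\<lambda>y. R y $ 1) x * pd 1 (\<lambda>y. Q y $ j) (R x) + pd i (\<lambda>y. R y $ 2) x * pd 2 (\<lambda>y. Q y $ j) (R x)" for i j
    using pd_comp[OF smooth2_diff[OF R] smooth2_diff[OF smooth2_nth[OF Q]], of i]
    by (simp add: pd_nth[OF smooth2_diff[OF R]])
  show ?thesis unfolding jac_def c by (simp add: algebra_simps)
qed

lemma divergence_scale: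
  assumes "\<forall>x. u differentiable (at x)"
  shows "divergence (\<lambda>y. c *\<^sub>R u y) x = c * divergence u x"
proof -
  have "pd i (\<lambda>y. (c *\<^sub>R u y) $ j) x = c * pd i (\<lambda>y. u y $ j) x" for i j
  proof -
    have "pd i (\<lambda>y. c * (u y $ j)) x = c * pd i (\<lambda>y. u y $ j) x"
      by (rule pd_lin[OF bounded_linear_mult_right]) (use assms in \<open>simp add: differentiable_compose[OF bounded_linear_imp_differentiable[OF bounded_linear_vec_nth]]\<close>)
    then show ?thesis by simp
  qed
  then show ?thesis by (simp add: divergence_pd algebra_simps)
qed

lemma lattice_equiv_iff: "lattice_equiv x y \<longleftrightarrow> (\<exists>m n. x = y + vec2 (of_int m) (of_int n))"
proof
  assume "lattice_equiv x y"
  then have "(x - y)$1 \<in> \<int>" "(x - y)$2 \<in> \<int>" by (auto simp: lattice_equiv_def)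
  then obtain m n where "(x - y)$1 = of_int m" "(x - y)$2 = of_int n" by (metis Ints_cases)
  then have "x = y + vec2 (of_int m) (of_int n)" by (simp add: vec_eq_iff forall_2 algebra_simps)
  then show "\<exists>m n. x = y + vec2 (of_int m) (of_int n)" by blast
next
  assume "\<exists>m n. x = y + vec2 (of_int m) (of_int n)"
  then obtain m n where "x = y + vec2 (of_int m) (of_int n)" by blast
  then show "lattice_equiv x y" by (simp add: lattice_equiv_def forall_2)
qed

lemma lattice_shift_preserve:
  assumes "\<And>x m n. f (x + vec2 (of_int m) (of_int n)) = f x + vec2 (of_int m) (of_int n)"
  shows "lattice_equiv x y \<Longrightarrow> lattice_equiv (f x) (f y)"
  unfolding lattice_equiv_iff using assms by metis

context
  fixes F :: "real^2 \<Rightarrow> real"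
  assumes F: "dens F"
begin

lemma Psi_bij: "Psi F (inv (Psi F) y) = y" "inv (Psi F) (Psi F x) = x"
proof -
  have "surj (Psi F)" using Psi_surj[OF F] by (metis surjI)
  then show "Psi F (inv (Psi F) y) = y" by (rule surj_f_inv_f)
  have "inj (Psi F)" using Psi_inj[OF F] by (meson injI)
  then show "inv (Psi F) (Psi F x) = x" by (rule inv_f_f)
qed

lemma Psi_jac_nz: "jac (Psi F) x \<noteq> 0"
  using Psi_jac[OF F] K_pos[OF F] Fpos[OF F, of x] by simp

lemma Psi_inv_smooth: "smooth2 (inv (Psi F))"
  by (rule smooth2_inverse_map[OF Psi_smooth[OF F]]) (use Psi_bij Psi_jac_nz in auto)

lemma Psi_inv_shift: "inv (Psi F) (y + vec2 (of_int m) (of_int n)) = inv (Psi F) y + vec2 (of_int m) (of_int n)"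
proof -
  have "Psi F (inv (Psi F) y + vec2 (of_int m) (of_int n)) = y + vec2 (of_int m) (of_int n)"
    using Psi_shift[OF F] Psi_bij by simp
  then have "inv (Psi F) (Psi F (inv (Psi F) y + vec2 (of_int m) (of_int n))) = inv (Psi F) (y + vec2 (of_int m) (of_int n))"
    by simp
  then show ?thesis using Psi_bij by simp
qed

end

lemma prob_dens: "prob_density F \<Longrightarrow> dens F"
  by (simp add: prob_density_def dens_def)

definition Zmap where "Zmap F P x = inv (Psi P) (Psi F x)"

lemma Zmap_props:
  assumes F: "dens F" and P: "dens P"
  shows "smooth2 (Zmap F P)"
    and "\<And>x. Zmap P F (Zmap F P x) = x"
    and "\<And>x m n. Zmap F P (x + vec2 (of_int m) (of_int n)) = Zmap F P x + vec2 (of_int m) (of_int n)"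
    and "\<And>x. P (Zmap F P x) * jac (Zmap F P) x = (KK P / KK F) * F x"
proof -
  show s: "smooth2 (Zmap F P)" unfolding Zmap_def[abs_def]
    by (rule smooth2_comp[OF Psi_inv_smooth[OF P] Psi_smooth[OF F]])
  show "\<And>x. Zmap P F (Zmap F P x) = x"
    by (simp add: Zmap_def Psi_bij[OF F] Psi_bij[OF P])
  show "\<And>x m n. Zmap F P (x + vec2 (of_int m) (of_int n)) = Zmap F P x + vec2 (of_int m) (of_int n)"
    by (simp add: Zmap_def Psi_shift[OF F] Psi_inv_shift[OF P])
  fix x
  have e: "Psi F = (\<lambda>x. Psi P (Zmap F P x))"
    by (rule ext) (simp add: Zmap_def Psi_bij[OF P])
  have "jac (Psi F) x = jac (Psi P) (Zmap F P x) * jac (Zmap F P) x"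
    by (subst e) (rule jac_comp[OF Psi_smooth[OF P] s])
  then have "F x / KK F = P (Zmap F P x) / KK P * jac (Zmap F P) x"
    by (simp add: Psi_jac[OF F] Psi_jac[OF P])
  then show "P (Zmap F P x) * jac (Zmap F P) x = (KK P / KK F) * F x"
    using K_pos[OF F] K_pos[OF P] by (simp add: field_simps)
qed

lemma fd_inverse_id:
  assumes Z: "smooth2 Z" and W: "smooth2 W" and WZ: "\<forall>x. W (Z x) = x" and ZW: "\<forall>z. Z (W z) = z"
  shows "frechet_derivative W (at z) (frechet_derivative Z (at (W z)) h) = h"
proof -
  have "frechet_derivative (W \<circ> Z) (at (W z)) = frechet_derivative W (at (Z (W z))) \<circ> frechet_derivative Z (at (W z))"
    by (rule frechet_derivative_compose) (use Z W smooth2_diff in blast)+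
  moreover have "W \<circ> Z = id" using WZ by (simp add: fun_eq_iff)
  ultimately have "frechet_derivative W (at z) \<circ> frechet_derivative Z (at (W z)) = id"
    using ZW by simp
  then show ?thesis by (metis comp_apply id_apply)
qed

lemma eigen_transport:
  fixes phi :: "real^2 \<Rightarrow> complex"
  assumes Z: "smooth2 Z" and W: "smooth2 W" and WZ: "\<forall>x. W (Z x) = x" and ZW: "\<forall>z. Z (W z) = z"
    and Wl: "\<forall>x y. lattice_equiv x y \<longrightarrow> lattice_equiv (W x) (W y)"
    and per: "periodic2 phi"
  shows "eigenfun v lam phi \<longleftrightarrow> eigenfun (pushforward Z W v) lam (phi \<circ> W)"
proof -
  have key: "frechet_derivative (phi \<circ> W) (at z) (pushforward Z W v z) = frechet_derivative phi (at (W z)) (v (W z))"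
    if sp: "smooth2 phi" for z
  proof -
    have "frechet_derivative (phi \<circ> W) (at z) = frechet_derivative phi (at (W z)) \<circ> frechet_derivative W (at z)"
      by (rule frechet_derivative_compose) (use W sp smooth2_diff in blast)+
    then show ?thesis
      unfolding pushforward_def using fd_inverse_id[OF Z W WZ ZW] by simp
  qed
  have perW: "periodic2 (phi \<circ> W)" using per Wl unfolding periodic2_def by simp
  show ?thesis
  proof
    assume e: "eigenfun v lam phi"
    then have sp: "smooth2 phi" by (simp add: eigenfun_def)
    have s: "smooth2 (phi \<circ> W)" using smooth2_comp[OF sp W] by (simp add: o_def)
    obtain x0 where "phi x0 \<noteq> 0" using e by (auto simp: eigenfun_def)
    then have nz: "(phi \<circ> W) (Z x0) \<noteq> 0" using WZ by simp
    have "frechet_derivative (phi \<circ> W) (at z) (pushforward Z W v z) = lam * (phi \<circ> W) z" for z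
      using key[OF sp, of z] e by (simp add: eigenfun_def)
    then show "eigenfun (pushforward Z W v) lam (phi \<circ> W)"
      unfolding eigenfun_def using s perW nz by blast
  next
    assume e: "eigenfun (pushforward Z W v) lam (phi \<circ> W)"
    then have s: "smooth2 (phi \<circ> W)" by (simp add: eigenfun_def)
    have "phi = (\<lambda>x. (phi \<circ> W) (Z x))" using WZ by (simp add: fun_eq_iff)
    then have sp: "smooth2 phi" using smooth2_comp[OF s Z] by simp
    obtain z0 where "(phi \<circ> W) z0 \<noteq> 0" using e by (auto simp: eigenfun_def)
    then have nz: "phi (W z0) \<noteq> 0" by simp
    have "frechet_derivative phi (at x) (v x) = lam * phi x" for x
    proof -
      have "frechet_derivative (phi \<circ> W) (at (Z x)) (pushforward Z W v (Z x)) = lam * (phi \<circ> W) (Z x)"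
        using e by (simp add: eigenfun_def)
      then show ?thesis using key[OF sp, of "Z x"] WZ by simp
    qed
    then show "eigenfun v lam phi"
      unfolding eigenfun_def using sp per nz by blast
  qed
qed

theorem mainTheorem2:
  fixes F pi :: "real^2 \<Rightarrow> real" and v :: "real^2 \<Rightarrow> real^2"
  assumes "prob_density F" and "prob_density pi"
    and "vfield v"
    and "\<forall>x. divergence (\<lambda>y. F y *\<^sub>R v y) x = 0"
  shows "\<exists>Z W. torus_diffeo Z W \<and>
           (\<forall>x. divergence (\<lambda>y. pi y *\<^sub>R pushforward Z W v y) x = 0) \<and>
           eigenvalues (pushforward Z W v) = eigenvalues v \<and>
           (\<forall>lam phi. periodic2 phi \<longrightarrow>
              (eigenfun v lam phi \<longleftrightarrow> eigenfun (pushforward Z W v) lam (phi \<circ> W)))"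
proof -
  have F: "dens F" and P: "dens pi" using assms(1,2) prob_dens by blast+
  have vs: "smooth2 v" and vp: "periodic2 v" using assms(3) by (auto simp: vfield_def)
  define Z where "Z = Zmap F pi"
  define W where "W = Zmap pi F"
  have sZ: "smooth2 Z" and sW: "smooth2 W" unfolding Z_def W_def using Zmap_props F P by blast+
  have WZ: "\<forall>x. W (Z x) = x" and ZW: "\<forall>z. Z (W z) = z"
    unfolding Z_def W_def using Zmap_props(2)[OF F P] Zmap_props(2)[OF P F] by blast+
  have Zl: "\<forall>x y. lattice_equiv x y \<longrightarrow> lattice_equiv (Z x) (Z y)"
    unfolding Z_def using lattice_shift_preserve[OF Zmap_props(3)[OF F P]] by blast
  have Wl: "\<forall>x y. lattice_equiv x y \<longrightarrow> lattice_equiv (W x) (W y)"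
    unfolding W_def using lattice_shift_preserve[OF Zmap_props(3)[OF P F]] by blast
  have refl: "lattice_equiv x x" for x by (simp add: lattice_equiv_def)
  have td: "torus_diffeo Z W"
    unfolding torus_diffeo_def using sZ sW Zl Wl WZ ZW refl by simp
  have dn: "\<forall>x. pi (Z x) * jac Z x = (KK pi / KK F) * F x"
    unfolding Z_def using Zmap_props(4)[OF F P] by blast
  have Jnz: "\<forall>x. jac Z x \<noteq> 0"
  proof
    fix x
    have "(KK pi / KK F) * F x \<noteq> 0" using K_pos[OF F] K_pos[OF P] Fpos[OF F, of x] by simp
    then show "jac Z x \<noteq> 0" using dn by (metis mult_zero_right)
  qed
  have sFv: "smooth2 (\<lambda>y. F y *\<^sub>R v y)" by (rule smooth2_scaleR[OF Fs[OF F] vs])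
  have div0: "\<forall>x. divergence (\<lambda>y. ((KK pi / KK F) * F y) *\<^sub>R v y) x = 0"
  proof
    fix x
    have "divergence (\<lambda>y. ((KK pi / KK F) * F y) *\<^sub>R v y) x = divergence (\<lambda>y. (KK pi / KK F) *\<^sub>R (F y *\<^sub>R v y)) x"
      by simp
    also have "\<dots> = (KK pi / KK F) * divergence (\<lambda>y. F y *\<^sub>R v y) x"
      by (rule divergence_scale) (use smooth2_diff[OF sFv] in blast)
    finally show "divergence (\<lambda>y. ((KK pi / KK F) * F y) *\<^sub>R v y) x = 0" using assms(4) by simp
  qed
  have divpi: "\<forall>x. divergence (\<lambda>y. pi y *\<^sub>R pushforward Z W v y) x = 0"
  proof
    fix z
    show "divergence (\<lambda>y. pi y *\<^sub>R pushforward Z W v y) z = 0"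
    proof (rule div_transport[OF sZ sW ZW WZ Jnz dn _ vs div0])
      show "smooth2 (\<lambda>x. KK pi / KK F * F x)" by (intro smooth2_mult smooth2_const Fs[OF F])
    qed
  qed
  have eq: "\<forall>lam phi. periodic2 phi \<longrightarrow>
              (eigenfun v lam phi \<longleftrightarrow> eigenfun (pushforward Z W v) lam (phi \<circ> W))"
    using eigen_transport[OF sZ sW WZ ZW Wl] by blast
  have ev: "eigenvalues (pushforward Z W v) = eigenvalues v"
  proof
    show "eigenvalues (pushforward Z W v) \<subseteq> eigenvalues v"
    proof
      fix lam assume "lam \<in> eigenvalues (pushforward Z W v)"
      then obtain psi where e: "eigenfun (pushforward Z W v) lam psi" by (auto simp: eigenvalues_def)
      have pp: "periodic2 psi" using e by (simp add: eigenfun_def)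
      have "periodic2 (psi \<circ> Z)" using pp Zl unfolding periodic2_def by simp
      moreover have "(psi \<circ> Z) \<circ> W = psi" using ZW by (simp add: fun_eq_iff)
      ultimately have "eigenfun v lam (psi \<circ> Z)" using eq e by metis
      then show "lam \<in> eigenvalues v" by (auto simp: eigenvalues_def)
    qed
    show "eigenvalues v \<subseteq> eigenvalues (pushforward Z W v)"
    proof
      fix lam assume "lam \<in> eigenvalues v"
      then obtain phi where e: "eigenfun v lam phi" by (auto simp: eigenvalues_def)
      have "periodic2 phi" using e by (simp add: eigenfun_def)
      then have "eigenfun (pushforward Z W v) lam (phi \<circ> W)" using eq e by blast
      then show "lam \<in> eigenvalues (pushforward Z W v)" by (auto simp: eigenvalues_def)
    qed
  qed
  show ?thesis using td divpi ev eq by blast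
qed

end
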